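(* Let $H_i=H_i(x_{i-1},x_i)$ for $i\in[1,n]$ be two-terminal signed graphs and $G=\mathcal S(H_1,\dots,H_n)$ with $n=|\mathcal B(G)|\ge 2$. Suppose $\mathcal B_0(G)=\emptyset$, $\mathcal B_2(G)\neq\emptyset$, and every $H_i\in\mathcal B_2(G)$ has a $\Psi_{x_{i-1}x_i}(2)$-cover. Then exactly one of the following holds: (1) $G$ has a $\Psi_{x_0x_n}(2)$-cover in which no tadpole at $x_0$ contains the vertex $x_n$ and no tadpole at $x_n$ contains the vertex $x_0$; (2) $\mathcal B_2(G)=\{H_1\}$ and every $\Psi_{x_0x_1}(2)$-cover of $H_1$ contains a tadpole at $x_1$ containing the vertex $x_0$; (3) $\mathcal B_2(G)=\{H_n\}$ and every $\Psi_{x_{n-1}x_n}(2)$-cover of $H_n$ contains a tadpole at $x_{n-1}$ containing the vertex $x_n$.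
   Context: Signed graph: a finite graph (multiple edges and loops allowed) with signature $\sigma:E\to\{1,-1\}$. For a subgraph $S$, $\sigma(S)=\prod_{e\in S}\sigma(e)$; a path is positive if its sign is $1$, negative otherwise. A circuit is a connected $2$-regular subgraph; balanced if it has an even number of negative edges, unbalanced otherwise. A barbell is the union of two unbalanced circuits $C_1,C_2$ and a path $P$ such that either $P$ is trivial and $C_1,C_2$ share exactly one vertex, or $C_1,C_2$ are vertex-disjoint and $P$ joins them meeting $C_1\cup C_2$ only at its ends. A signed circuit is a balanced circuit or a barbell. A tadpole at $x$ is the union of an $xy$-path $P$ (possibly trivial) and an unbalanced circuit $C$ with $V(P)\cap V(C)=\{y\}$. A signed subgraph $6$-cover is a family (multiset) of subgraphs such that every edge lies in exactly $6$ members. For distinct vertices $x,y$ and $t\in[0,3]$, a $\Psi_{xy}(t)$-cover is a signed subgraph $6$-cover consisting of exactly $t$ positive $xy$-paths, $t$ negative $xy$-paths, $t$ tadpoles at $x$, $6-2t$ tadpoles at $y$, and some signed circuits. A two-terminal signed graph $H(x,y)$ is a connected nonempty signed graph with source terminal $x$ and target terminal $y$, where $x=y$ iff $H$ is a single negative loop. The series connection $\mathcal S(H_1,\dots,H_n)$ of pairwise disjoint $H_i(x_i,y_i)$ is obtained from $H_1\cup\dots\cup H_n$ by identifying $y_{i-1}$ with $x_i$ for $i\in[2,n]$, with source $x_1$ and target $y_n$. If $G=\mathcal S(H_1,\dots,H_n)$ with $n$ maximum, the $H_i$ are the parts of $G$, forming $\mathcal B(G)$; $\mathcal B_0(G)$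 = parts with equal terminals (negative loops), $\mathcal B_1(G)$ = parts with distinct terminals and one edge, $\mathcal B_2(G)$ = parts with distinct terminals and at least two edges. *)

theory Defs
  imports Main "HOL-Library.Multiset"
begin

text \<open>A signed graph is given by a vertex set V, an edge set E, an endpoint map
  ends (each edge has one endpoint = loop, or two endpoints) and a signature sig
  with values 1 / -1.  Subgraphs are pairs (vertex set, edge set).\<close>

type_synonym ('v,'e) sg = "'v set \<times> 'e set"

definition signed_graph :: "('e \<Rightarrow> 'v set) \<Rightarrow> ('e \<Rightarrow> int) \<Rightarrow> 'v set \<Rightarrow> 'e set \<Rightarrow> bool" where
  "signed_graph ends sig V E \<longleftrightarrow> finite V \<and> finite E \<and>
     (\<forall>e\<in>E. ends e \<subseteq> V \<and> card (ends e) \<in> {1,2} \<and> sig e \<in> {1,-1})"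

definition sg_union :: "('v,'e) sg \<Rightarrow> ('v,'e) sg \<Rightarrow> ('v,'e) sg" where
  "sg_union A B = (fst A \<union> fst B, snd A \<union> snd B)"

definition is_subgraph :: "('e \<Rightarrow> 'v set) \<Rightarrow> 'v set \<Rightarrow> 'e set \<Rightarrow> ('v,'e) sg \<Rightarrow> bool" where
  "is_subgraph ends V E S \<longleftrightarrow> fst S \<subseteq> V \<and> snd S \<subseteq> E \<and> (\<forall>e\<in>snd S. ends e \<subseteq> fst S)"

definition sg_connected :: "('e \<Rightarrow> 'v set) \<Rightarrow> ('v,'e) sg \<Rightarrow> bool" where
  "sg_connected ends S \<longleftrightarrow> fst S \<noteq> {} \<and> (\<forall>e\<in>snd S. ends e \<subseteq> fst S) \<and>
     (\<forall>u\<in>fst S. \<forall>v\<in>fst S. (u, v) \<in> {(a, b). \<exists>e\<in>snd S. ends e = {a, b}}\<^sup>*)"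

definition sg_deg :: "('e \<Rightarrow> 'v set) \<Rightarrow> 'e set \<Rightarrow> 'v \<Rightarrow> nat" where
  "sg_deg ends ES v = card {e\<in>ES. v \<in> ends e \<and> card (ends e) = 2} + 2 * card {e\<in>ES. ends e = {v}}"

definition sg_sign :: "('e \<Rightarrow> int) \<Rightarrow> ('v,'e) sg \<Rightarrow> int" where
  "sg_sign sig S = (\<Prod>e\<in>snd S. sig e)"

definition is_circuit :: "('e \<Rightarrow> 'v set) \<Rightarrow> ('v,'e) sg \<Rightarrow> bool" where
  "is_circuit ends C \<longleftrightarrow> sg_connected ends C \<and> (\<forall>v\<in>fst C. sg_deg ends (snd C) v = 2)"

definition balanced :: "('e \<Rightarrow> int) \<Rightarrow> ('v,'e) sg \<Rightarrow> bool" where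
  "balanced sig C \<longleftrightarrow> even (card {e\<in>snd C. sig e = -1})"

definition is_path :: "('e \<Rightarrow> 'v set) \<Rightarrow> 'v \<Rightarrow> 'v \<Rightarrow> ('v,'e) sg \<Rightarrow> bool" where
  "is_path ends x y P \<longleftrightarrow> (\<exists>vs es. length vs = Suc (length es) \<and> distinct vs \<and> distinct es \<and>
      hd vs = x \<and> last vs = y \<and>
      (\<forall>i<length es. ends (es ! i) = {vs ! i, vs ! Suc i}) \<and>
      P = (set vs, set es))"

definition is_barbell :: "('e \<Rightarrow> 'v set) \<Rightarrow> ('e \<Rightarrow> int) \<Rightarrow> ('v,'e) sg \<Rightarrow> bool" where
  "is_barbell ends sig B \<longleftrightarrow> (\<exists>C1 C2 P.
      is_circuit ends C1 \<and> is_circuit ends C2 \<and> C1 \<noteq> C2 \<and>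
      \<not> balanced sig C1 \<and> \<not> balanced sig C2 \<and>
      B = sg_union (sg_union C1 C2) P \<and>
      ((\<exists>u. P = ({u}, {}) \<and> fst C1 \<inter> fst C2 = {u}) \<or>
       (fst C1 \<inter> fst C2 = {} \<and> (\<exists>u v. u \<in> fst C1 \<and> v \<in> fst C2 \<and> is_path ends u v P \<and>
           fst P \<inter> (fst C1 \<union> fst C2) = {u, v}))))"

definition signed_circuit :: "('e \<Rightarrow> 'v set) \<Rightarrow> ('e \<Rightarrow> int) \<Rightarrow> ('v,'e) sg \<Rightarrow> bool" where
  "signed_circuit ends sig S \<longleftrightarrow> (is_circuit ends S \<and> balanced sig S) \<or> is_barbell ends sig S"

definition is_tadpole :: "('e \<Rightarrow> 'v set) \<Rightarrow> ('e \<Rightarrow> int) \<Rightarrow> 'v \<Rightarrow> ('v,'e) sg \<Rightarrow> bool" where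
  "is_tadpole ends sig x T \<longleftrightarrow> (\<exists>y P C. is_path ends x y P \<and> is_circuit ends C \<and>
      \<not> balanced sig C \<and> fst P \<inter> fst C = {y} \<and> T = sg_union P C)"

definition six_cover :: "('e \<Rightarrow> 'v set) \<Rightarrow> 'v set \<Rightarrow> 'e set \<Rightarrow> ('v,'e) sg multiset \<Rightarrow> bool" where
  "six_cover ends V E F \<longleftrightarrow> (\<forall>S\<in>#F. is_subgraph ends V E S) \<and>
     (\<forall>e\<in>E. size (filter_mset (\<lambda>S. e \<in> snd S) F) = 6)"

definition psi_cover :: "('e \<Rightarrow> 'v set) \<Rightarrow> ('e \<Rightarrow> int) \<Rightarrow> 'v set \<Rightarrow> 'e set \<Rightarrow> 'v \<Rightarrow> 'v \<Rightarrow> nat \<Rightarrow>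
   ('v,'e) sg multiset \<Rightarrow> ('v,'e) sg multiset \<Rightarrow> ('v,'e) sg multiset \<Rightarrow> ('v,'e) sg multiset \<Rightarrow>
   ('v,'e) sg multiset \<Rightarrow> bool" where
  "psi_cover ends sig V E x y t Pp Pn Tx Ty Cs \<longleftrightarrow>
     x \<in> V \<and> y \<in> V \<and> x \<noteq> y \<and> t \<le> 3 \<and>
     six_cover ends V E (Pp + Pn + Tx + Ty + Cs) \<and>
     size Pp = t \<and> size Pn = t \<and> size Tx = t \<and> size Ty = 6 - 2 * t \<and>
     (\<forall>P\<in>#Pp. is_path ends x y P \<and> sg_sign sig P = 1) \<and>
     (\<forall>P\<in>#Pn. is_path ends x y P \<and> sg_sign sig P = -1) \<and>
     (\<forall>T\<in>#Tx. is_tadpole ends sig x T) \<and>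
     (\<forall>T\<in>#Ty. is_tadpole ends sig y T) \<and>
     (\<forall>C\<in>#Cs. signed_circuit ends sig C)"

definition two_terminal :: "('e \<Rightarrow> 'v set) \<Rightarrow> ('e \<Rightarrow> int) \<Rightarrow> 'v set \<Rightarrow> 'e set \<Rightarrow> 'v \<Rightarrow> 'v \<Rightarrow> bool" where
  "two_terminal ends sig VH EH x y \<longleftrightarrow> sg_connected ends (VH, EH) \<and> x \<in> VH \<and> y \<in> VH \<and>
     (x = y \<longleftrightarrow> (VH = {x} \<and> (\<exists>e. EH = {e} \<and> ends e = {x} \<and> sig e = -1)))"

text \<open>(V,E) with source xs 0 and target xs n is the series connection of the parts
  H_i = (PV i, PE i) with terminals xs (i-1), xs i, i = 1..n, realised inside (V,E):
  the parts are edge-disjoint and two parts H_i, H_j (i < j) share exactly the vertex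
  x_i if all parts strictly between them are negative loops (so x_i = ... = x_(j-1)),
  and no vertex otherwise.\<close>
definition series_conn :: "('e \<Rightarrow> 'v set) \<Rightarrow> ('e \<Rightarrow> int) \<Rightarrow> 'v set \<Rightarrow> 'e set \<Rightarrow> nat \<Rightarrow>
    (nat \<Rightarrow> 'v) \<Rightarrow> (nat \<Rightarrow> 'v set) \<Rightarrow> (nat \<Rightarrow> 'e set) \<Rightarrow> bool" where
  "series_conn ends sig V E n xs PV PE \<longleftrightarrow> n \<ge> 1 \<and>
     (\<forall>i\<in>{1..n}. two_terminal ends sig (PV i) (PE i) (xs (i - 1)) (xs i)) \<and>
     V = (\<Union>i\<in>{1..n}. PV i) \<and> E = (\<Union>i\<in>{1..n}. PE i) \<and>
     (\<forall>i\<in>{1..n}. \<forall>j\<in>{1..n}. i < j \<longrightarrow> PE i \<inter> PE j = {} \<and>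
        PV i \<inter> PV j = (if (\<forall>k. i < k \<and> k < j \<longrightarrow> xs (k - 1) = xs k) then {xs i} else {}))"

text \<open>The decomposition has the maximum number of parts among all series decompositions
  of G with the same source and target; then the parts form B(G).\<close>
definition series_parts :: "('e \<Rightarrow> 'v set) \<Rightarrow> ('e \<Rightarrow> int) \<Rightarrow> 'v set \<Rightarrow> 'e set \<Rightarrow> nat \<Rightarrow>
    (nat \<Rightarrow> 'v) \<Rightarrow> (nat \<Rightarrow> 'v set) \<Rightarrow> (nat \<Rightarrow> 'e set) \<Rightarrow> bool" where
  "series_parts ends sig V E n xs PV PE \<longleftrightarrow> series_conn ends sig V E n xs PV PE \<and>
     (\<forall>m ys QV QE. series_conn ends sig V E m ys QV QE \<and> ys 0 = xs 0 \<and> ys m = xs n \<longrightarrow> m \<le> n)"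

definition B0_idx :: "nat \<Rightarrow> (nat \<Rightarrow> 'v) \<Rightarrow> nat set" where
  "B0_idx n xs = {i\<in>{1..n}. xs (i - 1) = xs i}"

definition B1_idx :: "nat \<Rightarrow> (nat \<Rightarrow> 'v) \<Rightarrow> (nat \<Rightarrow> 'e set) \<Rightarrow> nat set" where
  "B1_idx n xs PE = {i\<in>{1..n}. xs (i - 1) \<noteq> xs i \<and> card (PE i) = 1}"

definition B2_idx :: "nat \<Rightarrow> (nat \<Rightarrow> 'v) \<Rightarrow> (nat \<Rightarrow> 'e set) \<Rightarrow> nat set" where
  "B2_idx n xs PE = {i\<in>{1..n}. xs (i - 1) \<noteq> xs i \<and> card (PE i) \<ge> 2}"

definition exactly_one3 :: "bool \<Rightarrow> bool \<Rightarrow> bool \<Rightarrow> bool" where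
  "exactly_one3 a b c \<longleftrightarrow> (a \<and> \<not> b \<and> \<not> c) \<or> (\<not> a \<and> b \<and> \<not> c) \<or> (\<not> a \<and> \<not> b \<and> c)"

end

theory Submission
  imports Defs
begin

lemma path_props:
  assumes "is_path ends x y P"
  shows "x \<in> fst P" "y \<in> fst P" "finite (fst P)" "finite (snd P)"
    "\<forall>e\<in>snd P. ends e \<subseteq> fst P \<and> card (ends e) = 2"
proof -
  obtain vs es where L: "length vs = Suc (length es)" "distinct vs" "distinct es"
      "hd vs = x" "last vs = y" "\<forall>i<length es. ends (es ! i) = {vs ! i, vs ! Suc i}"
      "P = (set vs, set es)" using assms unfolding is_path_def by blast
  have ne: "vs \<noteq> []" using L(1) by auto
  show "x \<in> fst P" using L ne by auto
  show "y \<in> fst P" using L ne by auto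
  show "finite (fst P)" "finite (snd P)" using L by auto
  show "\<forall>e\<in>snd P. ends e \<subseteq> fst P \<and> card (ends e) = 2"
  proof
    fix e assume "e \<in> snd P"
    then obtain i where i: "i < length es" "e = es ! i" using L(7) by (auto simp: in_set_conv_nth)
    have "vs ! i \<noteq> vs ! Suc i" using L(1,2) i(1) by (simp add: nth_eq_iff_index_eq)
    then show "ends e \<subseteq> fst P \<and> card (ends e) = 2" using L i by auto
  qed
qed

lemma path_trivial:
  assumes "is_path ends x x P" shows "P = ({x},{})"
proof -
  obtain vs es where L: "length vs = Suc (length es)" "distinct vs"
      "hd vs = x" "last vs = x" "P = (set vs, set es)" using assms unfolding is_path_def by blast
  have "length vs = 1"
  proof (rule ccontr)
    assume "length vs \<noteq> 1"
    then have "length vs \<ge> 2" using L(1) by (cases es) auto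
    then have "vs ! 0 \<noteq> vs ! (length vs - 1)" using L(2) by (subst nth_eq_iff_index_eq) auto
    moreover have "vs ! 0 = x" using L(3) \<open>length vs \<ge> 2\<close> by (cases vs) auto
    moreover have "vs ! (length vs - 1) = x" using L(4) \<open>length vs \<ge> 2\<close> by (metis last_conv_nth list.size(3) not_numeral_le_zero)
    ultimately show False by simp
  qed
  then obtain v where "vs = [v]" by (cases vs) auto
  then show ?thesis using L \<open>length vs = 1\<close> by auto
qed

lemma path_triv_intro: "is_path ends x x ({x},{})"
  unfolding is_path_def by (rule exI[of _ "[x]"], rule exI[of _ "[]"]) auto

lemma path_rev:
  assumes "is_path ends x y P" shows "is_path ends y x P"
proof -
  obtain vs es where L: "length vs = Suc (length es)" "distinct vs" "distinct es"
      "hd vs = x" "last vs = y" "\<forall>i<length es. ends (es ! i) = {vs ! i, vs ! Suc i}"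
      "P = (set vs, set es)" using assms unfolding is_path_def by blast
  have ne: "vs \<noteq> []" using L(1) by auto
  show ?thesis unfolding is_path_def
  proof (intro exI conjI)
    show "length (rev vs) = Suc (length (rev es))" using L by simp
    show "distinct (rev vs)" "distinct (rev es)" using L by auto
    show "hd (rev vs) = y" using L ne by (simp add: hd_rev)
    show "last (rev vs) = x" using L ne by (simp add: last_rev)
    show "P = (set (rev vs), set (rev es))" using L by simp
    show "\<forall>i<length (rev es). ends (rev es ! i) = {rev vs ! i, rev vs ! Suc i}"
    proof (intro allI impI)
      fix i assume i: "i < length (rev es)"
      let ?j = "length es - 1 - i"
      have j: "?j < length es" using i by simp
      have "rev es ! i = es ! ?j" using i by (simp add: rev_nth)
      moreover have "rev vs ! i = vs ! Suc ?j" using i L(1) by (simp add: rev_nth Suc_diff_Suc)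
      moreover have "rev vs ! Suc i = vs ! ?j" using i L(1) by (simp add: rev_nth)
      ultimately show "ends (rev es ! i) = {rev vs ! i, rev vs ! Suc i}" using L(6) j by auto
    qed
  qed
qed


lemma path_concat:
  assumes P: "is_path ends a b P" and Q: "is_path ends b c Q" and I: "fst P \<inter> fst Q = {b}"
  shows "is_path ends a c (sg_union P Q)"
proof -
  obtain vs es where L: "length vs = Suc (length es)" "distinct vs" "distinct es"
      "hd vs = a" "last vs = b" "\<forall>i<length es. ends (es ! i) = {vs ! i, vs ! Suc i}"
      "P = (set vs, set es)" using P unfolding is_path_def by blast
  obtain ws fs where M: "length ws = Suc (length fs)" "distinct ws" "distinct fs"
      "hd ws = b" "last ws = c" "\<forall>i<length fs. ends (fs ! i) = {ws ! i, ws ! Suc i}"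
      "Q = (set ws, set fs)" using Q unfolding is_path_def by blast
  define bv where "bv = butlast vs"
  have vs: "vs = bv @ [b]" using L(1,5) unfolding bv_def
    by (metis append_butlast_last_id list.size(3) nat.distinct(1))
  have lbv: "length bv = length es" using L(1) vs by simp
  have ws0: "ws ! 0 = b" using M(1,4) by (cases ws) auto
  have wsne: "ws \<noteq> []" using M(1) by auto
  have bws: "b \<in> set ws" using ws0 wsne by (metis nth_mem length_greater_0_conv)
  have disj: "set bv \<inter> set ws = {}"
  proof -
    have "set bv \<inter> set ws \<subseteq> {b}" using I L(7) M(7) vs by auto
    moreover have "b \<notin> set bv" using L(2) vs by auto
    ultimately show ?thesis by auto
  qed
  have edisj: "set es \<inter> set fs = {}"
  proof (rule ccontr)
    assume "set es \<inter> set fs \<noteq> {}"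
    then obtain e where e: "e \<in> snd P" "e \<in> snd Q" using L(7) M(7) by auto
    have "ends e \<subseteq> fst P" "card (ends e) = 2" using path_props(5)[OF P] e by auto
    moreover have "ends e \<subseteq> fst Q" using path_props(5)[OF Q] e by auto
    ultimately have "ends e \<subseteq> {b}" using I by auto
    then have "card (ends e) \<le> 1" by (metis card.empty card_insert_le insert_absorb subset_singleton_iff One_nat_def card.insert finite.emptyI empty_iff le_refl zero_le)
    with \<open>card (ends e) = 2\<close> show False by simp
  qed
  show ?thesis unfolding is_path_def
  proof (intro exI conjI)
    show "length (bv @ ws) = Suc (length (es @ fs))" using lbv M(1) by simp
    show "distinct (bv @ ws)" using L(2) vs M(2) disj by auto
    show "distinct (es @ fs)" using L(3) M(3) edisj by auto
    show "hd (bv @ ws) = a" using L(4) M(4) vs wsne by (cases bv) auto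
    show "last (bv @ ws) = c" using M(5) wsne by simp
    show "sg_union P Q = (set (bv @ ws), set (es @ fs))"
      using L(7) M(7) vs bws unfolding sg_union_def by auto
    show "\<forall>i<length (es @ fs). ends ((es @ fs) ! i) = {(bv @ ws) ! i, (bv @ ws) ! Suc i}"
    proof (intro allI impI)
      fix i assume i: "i < length (es @ fs)"
      show "ends ((es @ fs) ! i) = {(bv @ ws) ! i, (bv @ ws) ! Suc i}"
      proof (cases "i < length es")
        case True
        have e1: "ends ((es @ fs) ! i) = {vs ! i, vs ! Suc i}" using L(6) True by (simp add: nth_append)
        have v1: "(bv @ ws) ! i = vs ! i" using True lbv vs by (simp add: nth_append)
        have v2: "(bv @ ws) ! Suc i = vs ! Suc i"
        proof (cases "Suc i < length es")
          case True then show ?thesis using lbv vs by (simp add: nth_append)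
        next
          case False
          then have si: "Suc i = length es" using \<open>i < length es\<close> by simp
          then have "(bv @ ws) ! Suc i = ws ! 0" using lbv by (simp add: nth_append)
          moreover have "vs ! Suc i = b" using si vs lbv by (simp add: nth_append)
          ultimately show ?thesis using ws0 by simp
        qed
        show ?thesis using e1 v1 v2 by simp
      next
        case False
        define j where "j = i - length es"
        have j: "j < length fs" "i = length es + j" using i False unfolding j_def by auto
        have "ends ((es @ fs) ! i) = {ws ! j, ws ! Suc j}" using M(6) j by (simp add: nth_append)
        moreover have "(bv @ ws) ! i = ws ! j" using j lbv by (simp add: nth_append)
        moreover have "(bv @ ws) ! Suc i = ws ! Suc j" using j lbv by (simp add: nth_append)
        ultimately show ?thesis by simp
      qed
    qed
  qed
qed

lemma path_edge:
  assumes "ends e = {x, y}" "x \<noteq> y"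
  shows "is_path ends x y ({x,y},{e})"
  unfolding is_path_def
  by (rule exI[of _ "[x,y]"], rule exI[of _ "[e]"]) (use assms in auto)


definition cnt :: "'e \<Rightarrow> ('v,'e) sg multiset \<Rightarrow> nat" where
  "cnt e A = size (filter_mset (\<lambda>S. e \<in> snd S) A)"

lemma cnt_plus[simp]: "cnt e (A + B) = cnt e A + cnt e B"
  unfolding cnt_def by simp

lemma cnt_image:
  assumes "\<forall>S\<in>#A. e \<in> snd (f S) \<longleftrightarrow> e \<in> snd S"
  shows "cnt e (image_mset f A) = cnt e A"
proof -
  have "filter_mset (\<lambda>S. e \<in> snd S) (image_mset f A) = image_mset f (filter_mset (\<lambda>S. e \<in> snd (f S)) A)"
    by (simp add: filter_mset_image_mset)
  also have "filter_mset (\<lambda>S. e \<in> snd (f S)) A = filter_mset (\<lambda>S. e \<in> snd S) A"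
    using assms by (intro filter_mset_cong0) auto
  finally show ?thesis unfolding cnt_def by simp
qed

lemma cnt_all: "\<forall>S\<in>#A. e \<in> snd S \<Longrightarrow> cnt e A = size A"
  unfolding cnt_def by (metis filter_mset_True filter_mset_cong0)

lemma cnt_none: "\<forall>S\<in>#A. e \<notin> snd S \<Longrightarrow> cnt e A = 0"
  unfolding cnt_def by (metis filter_mset_False filter_mset_cong0 size_empty)

lemma cnt_add_mset[simp]: "cnt e (add_mset x A) = (if e \<in> snd x then 1 else 0) + cnt e A"
  unfolding cnt_def by simp

lemma cnt_empty[simp]: "cnt e {#} = 0" unfolding cnt_def by simp

lemma six_cover_cnt: "six_cover ends V E F \<longleftrightarrow> (\<forall>S\<in>#F. is_subgraph ends V E S) \<and> (\<forall>e\<in>E. cnt e F = 6)"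
  unfolding six_cover_def cnt_def by simp

lemma prod_pm1:
  assumes "finite S" "\<forall>e\<in>S. sig e \<in> {1,-1::int}"
  shows "(\<Prod>e\<in>S. sig e) \<in> {1,-1}"
  using assms by (induction S rule: finite_induct) auto

lemma sign_union:
  assumes "finite (snd P)" "finite (snd Q)" "snd P \<inter> snd Q = {}"
  shows "sg_sign sig (sg_union P Q) = sg_sign sig P * sg_sign sig Q"
  using assms unfolding sg_sign_def sg_union_def by (simp add: prod.union_disjoint)

lemma circuit_vertex_edge:
  assumes "is_circuit ends C" "v \<in> fst C"
  shows "\<exists>e\<in>snd C. v \<in> ends e"
proof -
  have "sg_deg ends (snd C) v = 2" using assms unfolding is_circuit_def by auto
  then have "{e\<in>snd C. v \<in> ends e \<and> card (ends e) = 2} \<noteq> {} \<or> {e\<in>snd C. ends e = {v}} \<noteq> {}"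
    unfolding sg_deg_def by (metis add_cancel_right_left card.empty mult_zero_right zero_neq_numeral)
  then show ?thesis by auto
qed

lemma circuit_edges_ne:
  assumes "is_circuit ends C" shows "snd C \<noteq> {}"
proof -
  have "fst C \<noteq> {}" using assms unfolding is_circuit_def sg_connected_def by auto
  then obtain v where "v \<in> fst C" by auto
  then show ?thesis using circuit_vertex_edge[OF assms] by auto
qed

lemma tadpole_contains: "is_tadpole ends sig x T \<Longrightarrow> x \<in> fst T"
  unfolding is_tadpole_def sg_union_def using path_props(1) by fastforce

lemma tadpole_extend:
  assumes P: "is_path ends a x P" and T: "is_tadpole ends sig x T" and I: "fst P \<inter> fst T = {x}"
  shows "is_tadpole ends sig a (sg_union P T)"
proof -
  obtain y Q C where Q: "is_path ends x y Q" and C: "is_circuit ends C" "\<not> balanced sig C"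
    and QC: "fst Q \<inter> fst C = {y}" and TT: "T = sg_union Q C"
    using T unfolding is_tadpole_def by blast
  have "x \<in> fst Q" using path_props(1)[OF Q] .
  then have "fst P \<inter> fst Q = {x}" using I TT unfolding sg_union_def by auto
  then have PQ: "is_path ends a y (sg_union P Q)" using path_concat[OF P Q] by simp
  have "fst (sg_union P Q) \<inter> fst C = {y}"
  proof -
    have "fst P \<inter> fst C \<subseteq> {x}" using I TT unfolding sg_union_def by auto
    moreover have "x \<in> fst C \<Longrightarrow> x = y" using QC \<open>x \<in> fst Q\<close> by auto
    ultimately show ?thesis using QC unfolding sg_union_def by auto
  qed
  moreover have "sg_union P T = sg_union (sg_union P Q) C" using TT unfolding sg_union_def by auto
  ultimately show ?thesis unfolding is_tadpole_def using PQ C by blast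
qed

lemma barbell_of_tadpoles:
  assumes T1: "is_tadpole ends sig b T1" and T2: "is_tadpole ends sig b T2"
    and I: "fst T1 \<inter> fst T2 = {b}" and ED: "snd T1 \<inter> snd T2 = {}"
  shows "is_barbell ends sig (sg_union T1 T2)"
proof -
  obtain y1 Q1 C1 where Q1: "is_path ends b y1 Q1" and C1: "is_circuit ends C1" "\<not> balanced sig C1"
    and QC1: "fst Q1 \<inter> fst C1 = {y1}" and TT1: "T1 = sg_union Q1 C1"
    using T1 unfolding is_tadpole_def by blast
  obtain y2 Q2 C2 where Q2: "is_path ends b y2 Q2" and C2: "is_circuit ends C2" "\<not> balanced sig C2"
    and QC2: "fst Q2 \<inter> fst C2 = {y2}" and TT2: "T2 = sg_union Q2 C2"
    using T2 unfolding is_tadpole_def by blast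
  have bQ1: "b \<in> fst Q1" using path_props(1)[OF Q1] .
  have bQ2: "b \<in> fst Q2" using path_props(1)[OF Q2] .
  have neq: "C1 \<noteq> C2"
  proof
    assume "C1 = C2"
    then have "snd C1 \<subseteq> snd T1 \<inter> snd T2" using TT1 TT2 unfolding sg_union_def by auto
    then show False using ED circuit_edges_ne[OF C1(1)] by auto
  qed
  show ?thesis
  proof (cases "y1 = b \<and> y2 = b")
    case True
    have "Q1 = ({b},{})" using path_trivial Q1 True by fastforce
    moreover have "Q2 = ({b},{})" using path_trivial Q2 True by fastforce
    ultimately have "fst C1 \<inter> fst C2 = {b}" using QC1 QC2 I TT1 TT2 True unfolding sg_union_def by auto
    moreover have "sg_union T1 T2 = sg_union (sg_union C1 C2) ({b},{})"
      using TT1 TT2 \<open>Q1 = _\<close> \<open>Q2 = _\<close> unfolding sg_union_def by auto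
    ultimately show ?thesis unfolding is_barbell_def using C1 C2 neq by blast
  next
    case False
    have d: "fst C1 \<inter> fst C2 = {}"
    proof (rule ccontr)
      assume "fst C1 \<inter> fst C2 \<noteq> {}"
      then obtain v where v: "v \<in> fst C1" "v \<in> fst C2" by auto
      then have "v = b" using I TT1 TT2 unfolding sg_union_def by auto
      then have "y1 = b" "y2 = b" using v QC1 QC2 bQ1 bQ2 by auto
      then show False using False by simp
    qed
    have Q1r: "is_path ends y1 b Q1" using path_rev[OF Q1] .
    have "fst Q1 \<inter> fst Q2 = {b}" using I TT1 TT2 bQ1 bQ2 unfolding sg_union_def by auto
    then have PP: "is_path ends y1 y2 (sg_union Q1 Q2)" using path_concat[OF Q1r Q2] by simp
    have y1: "y1 \<in> fst C1" using QC1 by auto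
    have y2: "y2 \<in> fst C2" using QC2 by auto
    have "fst (sg_union Q1 Q2) \<inter> (fst C1 \<union> fst C2) = {y1, y2}"
    proof
      show "{y1, y2} \<subseteq> fst (sg_union Q1 Q2) \<inter> (fst C1 \<union> fst C2)"
        using QC1 QC2 unfolding sg_union_def by auto
      show "fst (sg_union Q1 Q2) \<inter> (fst C1 \<union> fst C2) \<subseteq> {y1, y2}"
      proof
        fix v assume v: "v \<in> fst (sg_union Q1 Q2) \<inter> (fst C1 \<union> fst C2)"
        have A: "v \<in> fst Q1 \<Longrightarrow> v \<in> fst C2 \<Longrightarrow> v = y2"
        proof -
          assume "v \<in> fst Q1" "v \<in> fst C2"
          then have "v = b" using I TT1 TT2 unfolding sg_union_def by auto
          then show "v = y2" using QC2 bQ2 \<open>v \<in> fst C2\<close> by auto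
        qed
        have B: "v \<in> fst Q2 \<Longrightarrow> v \<in> fst C1 \<Longrightarrow> v = y1"
        proof -
          assume "v \<in> fst Q2" "v \<in> fst C1"
          then have "v = b" using I TT1 TT2 unfolding sg_union_def by auto
          then show "v = y1" using QC1 bQ1 \<open>v \<in> fst C1\<close> by auto
        qed
        show "v \<in> {y1, y2}" using v A B QC1 QC2 unfolding sg_union_def by auto
      qed
    qed
    moreover have "sg_union T1 T2 = sg_union (sg_union C1 C2) (sg_union Q1 Q2)"
      using TT1 TT2 unfolding sg_union_def by auto
    ultimately show ?thesis unfolding is_barbell_def using C1 C2 neq d PP y1 y2 by blast
  qed
qed

lemma psi_swap:
  assumes "psi_cover ends sig V E x y 2 Pp Pn Tx Ty Cs"
  shows "psi_cover ends sig V E y x 2 Pp Pn Ty Tx Cs"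
proof -
  have e: "Pp + Pn + Ty + Tx + Cs = Pp + Pn + Tx + Ty + Cs" by (simp add: add_ac)
  have A: "x \<in> V" "y \<in> V" "x \<noteq> y" "six_cover ends V E (Pp + Pn + Tx + Ty + Cs)"
     "size Pp = 2" "size Pn = 2" "size Tx = 2" "size Ty = 2"
     "\<forall>T\<in>#Tx. is_tadpole ends sig x T" "\<forall>T\<in>#Ty. is_tadpole ends sig y T"
     "\<forall>C\<in>#Cs. signed_circuit ends sig C"
     "\<forall>P\<in>#Pp. is_path ends x y P \<and> sg_sign sig P = 1" "\<forall>P\<in>#Pn. is_path ends x y P \<and> sg_sign sig P = -1"
    using assms unfolding psi_cover_def by simp_all
  have p: "\<forall>P\<in>#Pp. is_path ends y x P \<and> sg_sign sig P = 1" "\<forall>P\<in>#Pn. is_path ends y x P \<and> sg_sign sig P = -1"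
  proof -
    show "\<forall>P\<in>#Pp. is_path ends y x P \<and> sg_sign sig P = 1"
    proof
      fix P assume "P \<in># Pp" then show "is_path ends y x P \<and> sg_sign sig P = 1"
        using A(12) path_rev[of ends x y P] by auto
    qed
    show "\<forall>P\<in>#Pn. is_path ends y x P \<and> sg_sign sig P = -1"
    proof
      fix P assume "P \<in># Pn" then show "is_path ends y x P \<and> sg_sign sig P = -1"
        using A(13) path_rev[of ends x y P] by auto
    qed
  qed
  show ?thesis unfolding psi_cover_def e using A p by (simp only: simp_thms numeral_le_iff semiring_norm order_refl) simp
qed


lemma psi_parts:
  assumes "psi_cover ends sig V E x y 2 Pp Pn Tx Ty Cs"
  shows "x \<in> V" "y \<in> V" "x \<noteq> y" "\<forall>S\<in>#Pp + Pn + Tx + Ty + Cs. is_subgraph ends V E S"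
     "\<forall>e\<in>E. cnt e (Pp + Pn + Tx + Ty + Cs) = 6"
     "size Pp = 2" "size Pn = 2" "size Tx = 2" "size Ty = 2"
     "\<forall>T\<in>#Tx. is_tadpole ends sig x T" "\<forall>T\<in>#Ty. is_tadpole ends sig y T"
     "\<forall>C\<in>#Cs. signed_circuit ends sig C"
     "\<forall>P\<in>#Pp. is_path ends x y P \<and> sg_sign sig P = 1" "\<forall>P\<in>#Pn. is_path ends x y P \<and> sg_sign sig P = -1"
  using assms unfolding psi_cover_def six_cover_cnt by simp_all

lemma psi_intro:
  assumes "x \<in> V" "y \<in> V" "x \<noteq> y" "\<forall>S\<in>#Pp + Pn + Tx + Ty + Cs. is_subgraph ends V E S"
     "\<forall>e\<in>E. cnt e (Pp + Pn + Tx + Ty + Cs) = 6"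
     "size Pp = 2" "size Pn = 2" "size Tx = 2" "size Ty = 2"
     "\<forall>T\<in>#Tx. is_tadpole ends sig x T" "\<forall>T\<in>#Ty. is_tadpole ends sig y T"
     "\<forall>C\<in>#Cs. signed_circuit ends sig C"
     "\<forall>P\<in>#Pp. is_path ends x y P \<and> sg_sign sig P = 1" "\<forall>P\<in>#Pn. is_path ends x y P \<and> sg_sign sig P = -1"
  shows "psi_cover ends sig V E x y 2 Pp Pn Tx Ty Cs"
  using assms unfolding psi_cover_def six_cover_cnt by simp_all

lemma subgraph_mono: "is_subgraph ends V E S \<Longrightarrow> V \<subseteq> V' \<Longrightarrow> E \<subseteq> E' \<Longrightarrow> is_subgraph ends V' E' S"
  unfolding is_subgraph_def by auto

lemma L1:
  assumes P: "is_path ends a b P" and H: "psi_cover ends sig V2 E2 b c 2 Pp Pn Tx Ty Cs"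
    and I: "fst P \<inter> V2 = {b}" and ED: "snd P \<inter> E2 = {}"
    and sg: "\<forall>e\<in>snd P. sig e \<in> {1,-1}" and fin: "finite E2"
  shows "\<exists>Pp' Pn'. psi_cover ends sig (fst P \<union> V2) (snd P \<union> E2) a c 2 Pp' Pn'
            (image_mset (sg_union P) Tx) Ty Cs"
proof -
  note h = psi_parts[OF H]
  let ?f = "sg_union P"
  define s where "s = sg_sign sig P"
  have s: "s \<in> {1,-1}" unfolding s_def sg_sign_def using prod_pm1 path_props(4)[OF P] sg by blast
  have sub2: "\<And>S. S \<in># Pp + Pn + Tx + Ty + Cs \<Longrightarrow> fst S \<subseteq> V2 \<and> snd S \<subseteq> E2"
    using h(4) unfolding is_subgraph_def by auto
  have Pe: "\<forall>e\<in>snd P. ends e \<subseteq> fst P" using path_props(5)[OF P] by auto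
  have pathf: "\<And>Q d. Q \<in># Pp + Pn \<Longrightarrow> is_path ends b c Q \<Longrightarrow>
      is_path ends a c (?f Q) \<and> sg_sign sig (?f Q) = s * sg_sign sig Q"
  proof -
    fix Q d assume Q: "Q \<in># Pp + Pn" "is_path ends b c Q"
    have "fst Q \<subseteq> V2" "snd Q \<subseteq> E2" using sub2[of Q] Q(1) by auto
    moreover have "b \<in> fst Q" using path_props(1)[OF Q(2)] .
    ultimately have "fst P \<inter> fst Q = {b}" using I by auto
    then have "is_path ends a c (?f Q)" using path_concat[OF P Q(2)] by simp
    moreover have "sg_sign sig (?f Q) = s * sg_sign sig Q" unfolding s_def
      using sign_union path_props(4)[OF P] path_props(4)[OF Q(2)] ED \<open>snd Q \<subseteq> E2\<close> by blast
    ultimately show "is_path ends a c (?f Q) \<and> sg_sign sig (?f Q) = s * sg_sign sig Q" by simp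
  qed
  define Pp' where "Pp' = (if s = 1 then image_mset ?f Pp else image_mset ?f Pn)"
  define Pn' where "Pn' = (if s = 1 then image_mset ?f Pn else image_mset ?f Pp)"
  have PPsum: "Pp' + Pn' = image_mset ?f (Pp + Pn)" unfolding Pp'_def Pn'_def by (simp add: add_ac)
  have "psi_cover ends sig (fst P \<union> V2) (snd P \<union> E2) a c 2 Pp' Pn' (image_mset ?f Tx) Ty Cs"
  proof (rule psi_intro)
    show "a \<in> fst P \<union> V2" using path_props(1)[OF P] by auto
    show "c \<in> fst P \<union> V2" using h(2) by auto
    show "a \<noteq> c" using I h(2,3) path_props(1)[OF P] by auto
    show "size Pp' = 2" "size Pn' = 2" "size (image_mset ?f Tx) = 2" "size Ty = 2"
      unfolding Pp'_def Pn'_def using h(6-9) by auto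
    show "\<forall>T\<in>#Ty. is_tadpole ends sig c T" using h(11) .
    show "\<forall>C\<in>#Cs. signed_circuit ends sig C" using h(12) .
    show "\<forall>T\<in>#image_mset ?f Tx. is_tadpole ends sig a T"
    proof
      fix T' assume "T' \<in># image_mset ?f Tx"
      then obtain T where T: "T \<in># Tx" "T' = ?f T" by auto
      have "fst T \<subseteq> V2" using sub2[of T] T(1) by auto
      moreover have "b \<in> fst T" using tadpole_contains[of ends sig b T] h(10) T(1) by auto
      ultimately have "fst P \<inter> fst T = {b}" using I by auto
      then show "is_tadpole ends sig a T'" using tadpole_extend[OF P _ ] h(10) T by blast
    qed
    show "\<forall>Q\<in>#Pp'. is_path ends a c Q \<and> sg_sign sig Q = 1"
      using s pathf h(13,14) unfolding Pp'_def by auto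
    show "\<forall>Q\<in>#Pn'. is_path ends a c Q \<and> sg_sign sig Q = -1"
      using s pathf h(13,14) unfolding Pn'_def by auto
    show "\<forall>S\<in>#Pp' + Pn' + image_mset ?f Tx + Ty + Cs. is_subgraph ends (fst P \<union> V2) (snd P \<union> E2) S"
    proof
      fix S assume S: "S \<in># Pp' + Pn' + image_mset ?f Tx + Ty + Cs"
      then have "S \<in># image_mset ?f (Pp + Pn + Tx) \<or> S \<in># Ty + Cs"
        using PPsum by (metis image_mset_union union_iff)
      then show "is_subgraph ends (fst P \<union> V2) (snd P \<union> E2) S"
      proof
        assume "S \<in># image_mset ?f (Pp + Pn + Tx)"
        then obtain R where R: "R \<in># Pp + Pn + Tx" "S = ?f R" by auto
        then have "is_subgraph ends V2 E2 R" using h(4) by auto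
        then show ?thesis using R Pe unfolding is_subgraph_def sg_union_def by auto
      next
        assume "S \<in># Ty + Cs"
        then have "is_subgraph ends V2 E2 S" using h(4) by auto
        then show ?thesis by (rule subgraph_mono) auto
      qed
    qed
    show "\<forall>e\<in>snd P \<union> E2. cnt e (Pp' + Pn' + image_mset ?f Tx + Ty + Cs) = 6"
    proof
      fix e assume e: "e \<in> snd P \<union> E2"
      have eq: "cnt e (Pp' + Pn' + image_mset ?f Tx + Ty + Cs) = cnt e (image_mset ?f (Pp + Pn + Tx)) + cnt e (Ty + Cs)"
        using PPsum by (metis cnt_plus image_mset_union add.assoc)
      show "cnt e (Pp' + Pn' + image_mset ?f Tx + Ty + Cs) = 6"
      proof (cases "e \<in> snd P")
        case True
        have "cnt e (image_mset ?f (Pp + Pn + Tx)) = size (image_mset ?f (Pp + Pn + Tx))"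
          by (rule cnt_all) (use True in \<open>auto simp: sg_union_def\<close>)
        moreover have "cnt e (Ty + Cs) = 0"
          by (rule cnt_none) (use True ED sub2 in fastforce)
        ultimately show ?thesis using eq h(6-8) by simp
      next
        case False
        then have eE: "e \<in> E2" using e by auto
        have "cnt e (image_mset ?f (Pp + Pn + Tx)) = cnt e (Pp + Pn + Tx)"
          by (rule cnt_image) (use False in \<open>auto simp: sg_union_def\<close>)
        moreover have "cnt e (Pp + Pn + Tx + Ty + Cs) = 6" using h(5) eE by blast
        ultimately show ?thesis using eq by simp
      qed
    qed
  qed
  then show ?thesis by blast
qed


lemma L2:
  assumes H: "psi_cover ends sig V1 E1 a b 2 Pp Pn Tx Ty Cs" and P: "is_path ends b c P"
    and I: "fst P \<inter> V1 = {b}" and ED: "snd P \<inter> E1 = {}"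
    and sg: "\<forall>e\<in>snd P. sig e \<in> {1,-1}" and fin: "finite E1"
  shows "\<exists>Pp' Pn'. psi_cover ends sig (V1 \<union> fst P) (E1 \<union> snd P) a c 2 Pp' Pn'
            Tx (image_mset (sg_union P) Ty) Cs"
proof -
  obtain Pp' Pn' where "psi_cover ends sig (fst P \<union> V1) (snd P \<union> E1) c a 2 Pp' Pn'
            (image_mset (sg_union P) Ty) Tx Cs"
    using L1[OF path_rev[OF P] psi_swap[OF H] I ED sg fin] by blast
  from psi_swap[OF this] show ?thesis by (metis sup_commute)
qed

lemma size2: assumes "size M = 2" shows "\<exists>u v. M = {#u, v#}"
proof -
  obtain u N where 1: "M = add_mset u N" "size N = Suc 0" using size_eq_Suc_imp_eq_union[of M 1] assms by auto
  obtain v K where 2: "N = add_mset v K" "size K = 0" using size_eq_Suc_imp_eq_union[of N 0] 1(2) by auto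
  show ?thesis using 1 2 by auto
qed

lemma concat_cover_paths:
  assumes Q1: "is_path ends a b Q1" and Q2: "is_path ends b c Q2"
    and S1: "fst Q1 \<subseteq> V1" "snd Q1 \<subseteq> E1" and S2: "fst Q2 \<subseteq> V2" "snd Q2 \<subseteq> E2"
    and I: "V1 \<inter> V2 = {b}" and ED: "E1 \<inter> E2 = {}"
  shows "is_path ends a c (sg_union Q1 Q2) \<and> sg_sign sig (sg_union Q1 Q2) = sg_sign sig Q1 * sg_sign sig Q2"
proof
  have "fst Q1 \<inter> fst Q2 = {b}" using S1 S2 I path_props(2)[OF Q1] path_props(1)[OF Q2] by auto
  then show "is_path ends a c (sg_union Q1 Q2)" using path_concat[OF Q1 Q2] by simp
  show "sg_sign sig (sg_union Q1 Q2) = sg_sign sig Q1 * sg_sign sig Q2"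
    using sign_union path_props(4)[OF Q1] path_props(4)[OF Q2] S1 S2 ED by blast
qed


lemma L3:
  assumes H1: "psi_cover ends sig V1 E1 a b 2 Pp1 Pn1 Tx1 Ty1 Cs1"
    and H2: "psi_cover ends sig V2 E2 b c 2 Pp2 Pn2 Tx2 Ty2 Cs2"
    and I: "V1 \<inter> V2 = {b}" and ED: "E1 \<inter> E2 = {}"
  shows "\<exists>Pp Pn Cs. psi_cover ends sig (V1 \<union> V2) (E1 \<union> E2) a c 2 Pp Pn Tx1 Ty2 Cs"
proof -
  note h1 = psi_parts[OF H1] and h2 = psi_parts[OF H2]
  obtain p1 p2 where p: "Pp1 = {#p1, p2#}" using size2[OF h1(6)] by blast
  obtain n1 n2 where n: "Pn1 = {#n1, n2#}" using size2[OF h1(7)] by blast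
  obtain t1 t2 where t: "Ty1 = {#t1, t2#}" using size2[OF h1(9)] by blast
  obtain q1 q2 where q: "Pp2 = {#q1, q2#}" using size2[OF h2(6)] by blast
  obtain m1 m2 where m: "Pn2 = {#m1, m2#}" using size2[OF h2(7)] by blast
  obtain s1 s2 where s: "Tx2 = {#s1, s2#}" using size2[OF h2(8)] by blast
  have sub1: "\<And>S. S \<in># Pp1 + Pn1 + Tx1 + Ty1 + Cs1 \<Longrightarrow> fst S \<subseteq> V1 \<and> snd S \<subseteq> E1 \<and> is_subgraph ends V1 E1 S"
    using h1(4) unfolding is_subgraph_def by auto
  have sub2: "\<And>S. S \<in># Pp2 + Pn2 + Tx2 + Ty2 + Cs2 \<Longrightarrow> fst S \<subseteq> V2 \<and> snd S \<subseteq> E2 \<and> is_subgraph ends V2 E2 S"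
    using h2(4) unfolding is_subgraph_def by auto
  have pp1: "is_path ends a b p1" "sg_sign sig p1 = 1" "is_path ends a b p2" "sg_sign sig p2 = 1"
    using h1(13) p by auto
  have nn1: "is_path ends a b n1" "sg_sign sig n1 = -1" "is_path ends a b n2" "sg_sign sig n2 = -1"
    using h1(14) n by auto
  have qq: "is_path ends b c q1" "sg_sign sig q1 = 1" "is_path ends b c q2" "sg_sign sig q2 = 1"
    using h2(13) q by auto
  have mm: "is_path ends b c m1" "sg_sign sig m1 = -1" "is_path ends b c m2" "sg_sign sig m2 = -1"
    using h2(14) m by auto
  have sp1: "fst p1 \<subseteq> V1 \<and> snd p1 \<subseteq> E1" "fst p2 \<subseteq> V1 \<and> snd p2 \<subseteq> E1"
     "fst n1 \<subseteq> V1 \<and> snd n1 \<subseteq> E1" "fst n2 \<subseteq> V1 \<and> snd n2 \<subseteq> E1"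
     "fst t1 \<subseteq> V1 \<and> snd t1 \<subseteq> E1" "fst t2 \<subseteq> V1 \<and> snd t2 \<subseteq> E1"
    using sub1[of p1] sub1[of p2] sub1[of n1] sub1[of n2] sub1[of t1] sub1[of t2] p n t by auto
  have sp2: "fst q1 \<subseteq> V2 \<and> snd q1 \<subseteq> E2" "fst q2 \<subseteq> V2 \<and> snd q2 \<subseteq> E2"
     "fst m1 \<subseteq> V2 \<and> snd m1 \<subseteq> E2" "fst m2 \<subseteq> V2 \<and> snd m2 \<subseteq> E2"
     "fst s1 \<subseteq> V2 \<and> snd s1 \<subseteq> E2" "fst s2 \<subseteq> V2 \<and> snd s2 \<subseteq> E2"
    using sub2[of q1] sub2[of q2] sub2[of m1] sub2[of m2] sub2[of s1] sub2[of s2] q m s by auto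
  have c1: "is_path ends a c (sg_union p1 q1) \<and> sg_sign sig (sg_union p1 q1) = 1"
    using concat_cover_paths[OF pp1(1) qq(1) _ _ _ _ I ED] sp1 sp2 pp1 qq by auto
  have c2: "is_path ends a c (sg_union n1 m1) \<and> sg_sign sig (sg_union n1 m1) = 1"
    using concat_cover_paths[OF nn1(1) mm(1) _ _ _ _ I ED] sp1 sp2 nn1 mm by auto
  have c3: "is_path ends a c (sg_union p2 m2) \<and> sg_sign sig (sg_union p2 m2) = -1"
    using concat_cover_paths[OF pp1(3) mm(3) _ _ _ _ I ED] sp1 sp2 pp1 mm by auto
  have c4: "is_path ends a c (sg_union n2 q2) \<and> sg_sign sig (sg_union n2 q2) = -1"
    using concat_cover_paths[OF nn1(3) qq(3) _ _ _ _ I ED] sp1 sp2 nn1 qq by auto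
  have tt: "is_tadpole ends sig b t1" "is_tadpole ends sig b t2" using h1(11) t by auto
  have ss: "is_tadpole ends sig b s1" "is_tadpole ends sig b s2" using h2(10) s by auto
  have b1: "is_barbell ends sig (sg_union t1 s1)"
  proof (rule barbell_of_tadpoles[OF tt(1) ss(1)])
    show "fst t1 \<inter> fst s1 = {b}" using sp1 sp2 I tadpole_contains[OF tt(1)] tadpole_contains[OF ss(1)] by auto
    show "snd t1 \<inter> snd s1 = {}" using sp1 sp2 ED by auto
  qed
  have b2: "is_barbell ends sig (sg_union t2 s2)"
  proof (rule barbell_of_tadpoles[OF tt(2) ss(2)])
    show "fst t2 \<inter> fst s2 = {b}" using sp1 sp2 I tadpole_contains[OF tt(2)] tadpole_contains[OF ss(2)] by auto
    show "snd t2 \<inter> snd s2 = {}" using sp1 sp2 ED by auto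
  qed
  define Pp where "Pp = {#sg_union p1 q1, sg_union n1 m1#}"
  define Pn where "Pn = {#sg_union p2 m2, sg_union n2 q2#}"
  define Cs where "Cs = Cs1 + Cs2 + {#sg_union t1 s1, sg_union t2 s2#}"
  have "psi_cover ends sig (V1 \<union> V2) (E1 \<union> E2) a c 2 Pp Pn Tx1 Ty2 Cs"
  proof (rule psi_intro)
    show "a \<in> V1 \<union> V2" "c \<in> V1 \<union> V2" using h1(1) h2(2) by auto
    show "a \<noteq> c" using h1(1,3) h2(2,3) I by auto
    show "size Pp = 2" "size Pn = 2" "size Tx1 = 2" "size Ty2 = 2"
      unfolding Pp_def Pn_def using h1(8) h2(9) by auto
    show "\<forall>T\<in>#Tx1. is_tadpole ends sig a T" using h1(10) .
    show "\<forall>T\<in>#Ty2. is_tadpole ends sig c T" using h2(11) .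
    show "\<forall>C\<in>#Cs. signed_circuit ends sig C"
      unfolding Cs_def using h1(12) h2(12) b1 b2 unfolding signed_circuit_def by auto
    show "\<forall>P\<in>#Pp. is_path ends a c P \<and> sg_sign sig P = 1" unfolding Pp_def using c1 c2 by auto
    show "\<forall>P\<in>#Pn. is_path ends a c P \<and> sg_sign sig P = -1" unfolding Pn_def using c3 c4 by auto
    have U: "\<And>S1 S2. is_subgraph ends V1 E1 S1 \<Longrightarrow> is_subgraph ends V2 E2 S2 \<Longrightarrow>
        is_subgraph ends (V1 \<union> V2) (E1 \<union> E2) (sg_union S1 S2)"
      unfolding is_subgraph_def sg_union_def by auto
    have g1: "\<forall>S\<in>#Pp1 + Pn1 + Tx1 + Ty1 + Cs1. is_subgraph ends V1 E1 S" using h1(4) .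
    have g2: "\<forall>S\<in>#Pp2 + Pn2 + Tx2 + Ty2 + Cs2. is_subgraph ends V2 E2 S" using h2(4) .
    show "\<forall>S\<in>#Pp + Pn + Tx1 + Ty2 + Cs. is_subgraph ends (V1 \<union> V2) (E1 \<union> E2) S"
    proof
      fix S assume S: "S \<in># Pp + Pn + Tx1 + Ty2 + Cs"
      have m1: "S \<in># Tx1 + Cs1 \<Longrightarrow> is_subgraph ends (V1 \<union> V2) (E1 \<union> E2) S" using g1 subgraph_mono[of ends V1 E1 S "V1 \<union> V2" "E1 \<union> E2"] by auto
      have m2: "S \<in># Ty2 + Cs2 \<Longrightarrow> is_subgraph ends (V1 \<union> V2) (E1 \<union> E2) S" using g2 subgraph_mono[of ends V2 E2 S "V1 \<union> V2" "E1 \<union> E2"] by auto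
      have m3: "S \<in># Pp + Pn + {#sg_union t1 s1, sg_union t2 s2#} \<Longrightarrow> is_subgraph ends (V1 \<union> V2) (E1 \<union> E2) S"
      proof -
        have a1: "is_subgraph ends V1 E1 p1" "is_subgraph ends V1 E1 p2" "is_subgraph ends V1 E1 n1"
          "is_subgraph ends V1 E1 n2" "is_subgraph ends V1 E1 t1" "is_subgraph ends V1 E1 t2"
          using g1 p n t by auto
        have a2: "is_subgraph ends V2 E2 q1" "is_subgraph ends V2 E2 q2" "is_subgraph ends V2 E2 m1"
          "is_subgraph ends V2 E2 m2" "is_subgraph ends V2 E2 s1" "is_subgraph ends V2 E2 s2"
          using g2 q m s by auto
        assume "S \<in># Pp + Pn + {#sg_union t1 s1, sg_union t2 s2#}"
        then show ?thesis unfolding Pp_def Pn_def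
          using U[OF a1(1) a2(1)] U[OF a1(3) a2(3)] U[OF a1(2) a2(4)] U[OF a1(4) a2(2)]
            U[OF a1(5) a2(5)] U[OF a1(6) a2(6)] by auto
      qed
      show "is_subgraph ends (V1 \<union> V2) (E1 \<union> E2) S" using S m1 m2 m3 unfolding Cs_def by auto
    qed
    show "\<forall>e\<in>E1 \<union> E2. cnt e (Pp + Pn + Tx1 + Ty2 + Cs) = 6"
    proof
      fix e assume e: "e \<in> E1 \<union> E2"
      show "cnt e (Pp + Pn + Tx1 + Ty2 + Cs) = 6"
      proof (cases "e \<in> E1")
        case True
        have n2: "\<forall>S\<in>#Pp2 + Pn2 + Tx2 + Ty2 + Cs2. e \<notin> snd S" using sub2 True ED by blast
        then have z: "cnt e Ty2 = 0" "cnt e Cs2 = 0" by (auto intro!: cnt_none)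
        have o: "cnt e (Pp1 + Pn1 + Tx1 + Ty1 + Cs1) = 6" using h1(5) True by blast
        have nq: "e \<notin> snd q1" "e \<notin> snd q2" "e \<notin> snd m1" "e \<notin> snd m2" "e \<notin> snd s1" "e \<notin> snd s2"
          using n2 q m s by auto
        show ?thesis using o z nq unfolding Pp_def Pn_def Cs_def p n t
          by (simp add: sg_union_def)
      next
        case False
        then have eE: "e \<in> E2" using e by auto
        have n1: "\<forall>S\<in>#Pp1 + Pn1 + Tx1 + Ty1 + Cs1. e \<notin> snd S" using sub1 eE ED by blast
        then have z: "cnt e Tx1 = 0" "cnt e Cs1 = 0" by (auto intro!: cnt_none)
        have o: "cnt e (Pp2 + Pn2 + Tx2 + Ty2 + Cs2) = 6" using h2(5) eE by blast
        have nq: "e \<notin> snd p1" "e \<notin> snd p2" "e \<notin> snd n1" "e \<notin> snd n2" "e \<notin> snd t1" "e \<notin> snd t2"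
          using n1 p n t by auto
        show ?thesis using o z nq unfolding Pp_def Pn_def Cs_def q m s
          by (simp add: sg_union_def)
      qed
    qed
  qed
  then show ?thesis by blast
qed


lemma even_sum_card:
  assumes "finite F" "\<forall>e\<in>F. c e \<le> (2::nat)"
  shows "even (\<Sum>e\<in>F. c e) = even (card {e\<in>F. c e = 1})"
  using assms
proof (induction F rule: finite_induct)
  case empty then show ?case by simp
next
  case (insert x F)
  have fin: "finite {e\<in>F. c e = 1}" using insert(1) by simp
  have "{e\<in>insert x F. c e = 1} = (if c x = 1 then insert x {e\<in>F. c e = 1} else {e\<in>F. c e = 1})" by auto
  moreover have "x \<notin> {e\<in>F. c e = 1}" using insert(2) by simp
  moreover have "c x \<le> 2" using insert(4) by simp
  ultimately show ?case using insert fin by (cases "c x"; cases "c x - 1"; auto)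
qed

lemma double_count:
  assumes "finite F" "finite W"
  shows "(\<Sum>v\<in>W. card {e\<in>F. v \<in> ends e \<and> P e}) = (\<Sum>e\<in>{e\<in>F. P e}. card (ends e \<inter> W))"
proof -
  have fG: "finite {e\<in>F. P e}" using assms by simp
  have s1: "\<And>v. card {e\<in>F. v \<in> ends e \<and> P e} = (\<Sum>e\<in>{e\<in>F. P e}. if v \<in> ends e then 1 else 0)"
  proof -
    fix v
    have "{e\<in>F. v \<in> ends e \<and> P e} = {e\<in>{e\<in>F. P e}. v \<in> ends e}" by auto
    then show "card {e\<in>F. v \<in> ends e \<and> P e} = (\<Sum>e\<in>{e\<in>F. P e}. if v \<in> ends e then 1 else 0)"
      using sum.inter_filter[OF fG, of "\<lambda>_. 1::nat" "\<lambda>e. v \<in> ends e"] by simp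
  qed
  have s3: "\<And>e. card (ends e \<inter> W) = (\<Sum>v\<in>W. if v \<in> ends e then 1 else 0)"
  proof -
    fix e
    have "ends e \<inter> W = {v\<in>W. v \<in> ends e}" by auto
    then show "card (ends e \<inter> W) = (\<Sum>v\<in>W. if v \<in> ends e then 1 else 0)"
      using sum.inter_filter[OF assms(2), of "\<lambda>_. 1::nat" "\<lambda>v. v \<in> ends e"] by simp
  qed
  have "(\<Sum>v\<in>W. card {e\<in>F. v \<in> ends e \<and> P e}) = (\<Sum>v\<in>W. \<Sum>e\<in>{e\<in>F. P e}. if v \<in> ends e then 1 else 0)"
    using s1 by simp
  also have "\<dots> = (\<Sum>e\<in>{e\<in>F. P e}. \<Sum>v\<in>W. if v \<in> ends e then 1 else 0)" by (rule sum.swap)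
  also have "\<dots> = (\<Sum>e\<in>{e\<in>F. P e}. card (ends e \<inter> W))"
    using s3 by simp
  finally show ?thesis .
qed

lemma circuit_cut_even:
  assumes C: "is_circuit ends C" and fin: "finite (snd C)" "finite (fst C)"
  shows "even (card {e\<in>snd C. card (ends e) = 2 \<and> card (ends e \<inter> L) = 1})"
proof -
  define W where "W = fst C \<inter> L"
  have finW: "finite W" using fin unfolding W_def by simp
  have ec: "\<forall>e\<in>snd C. ends e \<subseteq> fst C" using C unfolding is_circuit_def sg_connected_def by auto
  have "(\<Sum>v\<in>W. sg_deg ends (snd C) v) = (\<Sum>v\<in>W. 2)"
    using C unfolding is_circuit_def W_def by (intro sum.cong refl) auto
  then have ev: "even (\<Sum>v\<in>W. sg_deg ends (snd C) v)" by simp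
  have "(\<Sum>v\<in>W. sg_deg ends (snd C) v) = (\<Sum>v\<in>W. card {e\<in>snd C. v \<in> ends e \<and> card (ends e) = 2})
        + 2 * (\<Sum>v\<in>W. card {e\<in>snd C. ends e = {v}})"
    unfolding sg_deg_def by (simp add: sum.distrib sum_distrib_left)
  with ev have "even (\<Sum>v\<in>W. card {e\<in>snd C. v \<in> ends e \<and> card (ends e) = 2})" by simp
  then have ev2: "even (\<Sum>e\<in>{e\<in>snd C. card (ends e) = 2}. card (ends e \<inter> W))"
    using double_count[OF fin(1) finW, of ends "\<lambda>e. card (ends e) = 2"] by simp
  have eq: "\<And>e. e \<in> {e\<in>snd C. card (ends e) = 2} \<Longrightarrow> card (ends e \<inter> W) = card (ends e \<inter> L)"
  proof -
    fix e assume "e \<in> {e\<in>snd C. card (ends e) = 2}"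
    then have "ends e \<inter> W = ends e \<inter> L" using ec unfolding W_def by auto
    then show "card (ends e \<inter> W) = card (ends e \<inter> L)" by simp
  qed
  have le: "\<forall>e\<in>{e\<in>snd C. card (ends e) = 2}. card (ends e \<inter> L) \<le> 2"
  proof
    fix e assume e: "e \<in> {e\<in>snd C. card (ends e) = 2}"
    then have "finite (ends e)" by (intro card_ge_0_finite) auto
    then have "card (ends e \<inter> L) \<le> card (ends e)" by (intro card_mono) auto
    then show "card (ends e \<inter> L) \<le> 2" using e by simp
  qed
  have "even (\<Sum>e\<in>{e\<in>snd C. card (ends e) = 2}. card (ends e \<inter> L))"
  proof -
    have "(\<Sum>e\<in>{e\<in>snd C. card (ends e) = 2}. card (ends e \<inter> W)) = (\<Sum>e\<in>{e\<in>snd C. card (ends e) = 2}. card (ends e \<inter> L))"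
      by (rule sum.cong) (auto simp: eq)
    then show ?thesis using ev2 by simp
  qed
  then have "even (card {e\<in>{e\<in>snd C. card (ends e) = 2}. card (ends e \<inter> L) = 1})"
    using even_sum_card[OF _ le] fin(1) by simp
  moreover have "{e\<in>{e\<in>snd C. card (ends e) = 2}. card (ends e \<inter> L) = 1} = {e\<in>snd C. card (ends e) = 2 \<and> card (ends e \<inter> L) = 1}" by auto
  ultimately show ?thesis by simp
qed

lemma convex:
  assumes D: "distinct vs" "length vs = Suc (length es)" "\<forall>i<length es. ends (es!i) = {vs!i, vs!Suc i}"
    and EE: "set es \<subseteq> E" and X: "\<forall>e\<in>E. ends e \<inter> S \<noteq> {} \<and> \<not> ends e \<subseteq> S \<longrightarrow> ends e \<inter> S = {c}"
    and ij: "i \<le> k" "k \<le> j" "j < length vs" "vs!i \<in> S" "vs!j \<in> S"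
  shows "vs!k \<in> S"
proof (rule ccontr)
  assume nk: "vs!k \<notin> S"
  define A where "A = {p. i \<le> p \<and> p \<le> k \<and> vs!p \<in> S}"
  define B where "B = {q. k \<le> q \<and> q \<le> j \<and> vs!q \<in> S}"
  have fA: "finite A" "i \<in> A" unfolding A_def using ij by auto
  have fB: "finite B" "j \<in> B" unfolding B_def using ij by auto
  define p where "p = Max A"
  define q where "q = Min B"
  have pA: "p \<in> A" using fA unfolding p_def by (metis Max_in empty_iff)
  have qB: "q \<in> B" using fB unfolding q_def by (metis Min_in empty_iff)
  have pk: "p < k" using pA nk unfolding A_def by (metis (mono_tags, lifting) le_neq_implies_less mem_Collect_eq)
  have kq: "k < q" using qB nk unfolding B_def by (metis (mono_tags, lifting) le_neq_implies_less mem_Collect_eq)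
  have p1: "vs!(Suc p) \<notin> S"
  proof
    assume "vs!(Suc p) \<in> S"
    then have "Suc p \<in> A" using pA pk unfolding A_def by auto
    then have "Suc p \<le> p" using fA unfolding p_def by simp
    then show False by simp
  qed
  have q1: "vs!(q - 1) \<notin> S"
  proof
    assume "vs!(q - 1) \<in> S"
    then have "q - 1 \<in> B" using qB kq nk unfolding B_def by (cases "q - 1 = k") auto
    then have "q \<le> q - 1" using fB unfolding q_def by simp
    then show False using kq by simp
  qed
  have pl: "p < length es" using pk ij D(2) by simp
  have ql: "q - 1 < length es" "Suc (q - 1) = q" using kq ij D(2) qB unfolding B_def by auto
  have E1: "es!p \<in> E" "ends (es!p) = {vs!p, vs!Suc p}" "vs!p \<in> S"
    using EE pl D(3) pA unfolding A_def by auto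
  have E2: "es!(q-1) \<in> E" "ends (es!(q-1)) = {vs!(q-1), vs!q}" "vs!q \<in> S"
  proof -
    show "es!(q-1) \<in> E" using EE ql by auto
    have "ends (es!(q-1)) = {vs!(q-1), vs!Suc (q-1)}" using D(3) ql by auto
    then show "ends (es!(q-1)) = {vs!(q-1), vs!q}" using ql(2) by simp
    show "vs!q \<in> S" using qB unfolding B_def by auto
  qed
  have "vs!p = c"
  proof -
    have "ends (es!p) \<inter> S = {vs!p}" using E1 p1 by auto
    moreover have "ends (es!p) \<inter> S = {c}" using X[rule_format, OF E1(1)] E1 p1 by auto
    ultimately show ?thesis by simp
  qed
  moreover have "vs!q = c"
  proof -
    have "ends (es!(q-1)) \<inter> S = {vs!q}" using E2 q1 by auto
    moreover have "ends (es!(q-1)) \<inter> S = {c}" using X[rule_format, OF E2(1)] E2 q1 by auto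
    ultimately show ?thesis by simp
  qed
  moreover have "vs!p \<noteq> vs!q" using D(1) pk kq ij qB unfolding B_def by (simp add: nth_eq_iff_index_eq)
  ultimately show False by simp
qed


lemma path_lists:
  assumes "is_path ends x y P"
  obtains vs es where "length vs = Suc (length es)" "distinct vs" "distinct es"
      "hd vs = x" "last vs = y" "\<forall>i<length es. ends (es ! i) = {vs ! i, vs ! Suc i}"
      "P = (set vs, set es)"
  using assms unfolding is_path_def by blast

lemma hd_last_nth:
  assumes "length vs = Suc n" "hd vs = x" "last vs = y"
  shows "vs!0 = x" "vs!n = y"
  using assms by (cases vs; simp; metis last_conv_nth length_Cons list.distinct(1) diff_Suc_1)+

lemma path_in_S:
  assumes Q: "is_path ends u w Q" and QE: "snd Q \<subseteq> E" and uw: "u \<in> S" "w \<in> S"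
    and X: "\<forall>e\<in>E. ends e \<inter> S \<noteq> {} \<and> \<not> ends e \<subseteq> S \<longrightarrow> ends e \<inter> S = {c}"
    and h3: "\<forall>e\<in>E. ends e \<subseteq> S \<longrightarrow> e \<in> ES"
  shows "fst Q \<subseteq> S \<and> snd Q \<subseteq> ES"
proof -
  obtain vs es where L: "length vs = Suc (length es)" "distinct vs" "distinct es"
      "hd vs = u" "last vs = w" "\<forall>i<length es. ends (es ! i) = {vs ! i, vs ! Suc i}"
      "Q = (set vs, set es)" using path_lists[OF Q] by blast
  have hl: "vs!0 = u" "vs!(length es) = w" using hd_last_nth[OF L(1) L(4) L(5)] by auto
  have EE: "set es \<subseteq> E" using QE L(7) by auto
  have allS: "\<And>k. k < length vs \<Longrightarrow> vs!k \<in> S"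
  proof -
    fix k assume k: "k < length vs"
    show "vs!k \<in> S" by (rule convex[OF L(2) L(1) L(6) EE X, of 0 k "length es"]) (use k L(1) hl uw in auto)
  qed
  have "set vs \<subseteq> S" using allS by (auto simp: in_set_conv_nth)
  moreover have "set es \<subseteq> ES"
  proof
    fix e assume "e \<in> set es"
    then obtain i where i: "i < length es" "e = es!i" by (auto simp: in_set_conv_nth)
    then have "ends e \<subseteq> S" using L(6) allS L(1) by auto
    moreover have "e \<in> E" using EE i by auto
    ultimately show "e \<in> ES" using h3 by blast
  qed
  ultimately show ?thesis using L(7) by simp
qed

lemma path_suffix:
  assumes Q: "is_path ends a w Q" and QE: "snd Q \<subseteq> E" and aw: "a \<notin> S" "w \<in> S"
    and X: "\<forall>e\<in>E. ends e \<inter> S \<noteq> {} \<and> \<not> ends e \<subseteq> S \<longrightarrow> ends e \<inter> S = {c}"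
    and h3: "\<forall>e\<in>E. ends e \<subseteq> S \<longrightarrow> e \<in> ES" and h3': "\<forall>e\<in>ES. ends e \<subseteq> S"
  shows "is_path ends c w (fst Q \<inter> S, snd Q \<inter> ES)"
proof -
  obtain vs es where L: "length vs = Suc (length es)" "distinct vs" "distinct es"
      "hd vs = a" "last vs = w" "\<forall>i<length es. ends (es ! i) = {vs ! i, vs ! Suc i}"
      "Q = (set vs, set es)" using path_lists[OF Q] by blast
  have hl: "vs!0 = a" "vs!(length es) = w" using hd_last_nth[OF L(1) L(4) L(5)] by auto
  have EE: "set es \<subseteq> E" using QE L(7) by auto
  define p where "p = (LEAST i. vs!i \<in> S)"
  have pS: "vs!p \<in> S" unfolding p_def by (rule LeastI[of _ "length es"]) (use hl aw in simp)
  have ple: "p \<le> length es" unfolding p_def by (rule Least_le) (use hl aw in simp)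
  have p0: "p > 0" using pS hl aw by (cases p) auto
  have before: "\<And>k. k < p \<Longrightarrow> vs!k \<notin> S" unfolding p_def using not_less_Least by blast
  have after: "\<And>k. p \<le> k \<Longrightarrow> k < length vs \<Longrightarrow> vs!k \<in> S"
  proof -
    fix k assume k: "p \<le> k" "k < length vs"
    show "vs!k \<in> S" by (rule convex[OF L(2) L(1) L(6) EE X, of p k "length es"]) (use k L(1) hl aw pS in auto)
  qed
  have vpc: "vs!p = c"
  proof -
    have pm: "p - 1 < length es" "Suc (p - 1) = p" using p0 ple by auto
    have Em: "es!(p-1) \<in> E" using EE pm by auto
    have en: "ends (es!(p-1)) = {vs!(p-1), vs!p}" using L(6) pm by (metis)
    have nS: "vs!(p-1) \<notin> S" using before p0 by simp
    have "ends (es!(p-1)) \<inter> S = {vs!p}" using en nS pS by auto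
    moreover have "ends (es!(p-1)) \<inter> S = {c}" using X[rule_format, OF Em] en nS pS by auto
    ultimately show ?thesis by simp
  qed
  have sv: "set (drop p vs) = set vs \<inter> S"
  proof
    show "set (drop p vs) \<subseteq> set vs \<inter> S"
    proof
      fix x assume "x \<in> set (drop p vs)"
      then obtain i where i: "i < length vs - p" "x = vs!(p+i)" by (auto simp: in_set_conv_nth)
      then show "x \<in> set vs \<inter> S" using after[of "p+i"] by auto
    qed
    show "set vs \<inter> S \<subseteq> set (drop p vs)"
    proof
      fix x assume x: "x \<in> set vs \<inter> S"
      then obtain k where k: "k < length vs" "x = vs!k" by (auto simp: in_set_conv_nth)
      have "p \<le> k" using before[of k] x k by (metis IntD2 not_le_imp_less)
      then have "x = drop p vs ! (k - p)" "k - p < length (drop p vs)" using k by auto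
      then show "x \<in> set (drop p vs)" by (metis nth_mem)
    qed
  qed
  have se: "set (drop p es) = set es \<inter> ES"
  proof
    show "set (drop p es) \<subseteq> set es \<inter> ES"
    proof
      fix x assume "x \<in> set (drop p es)"
      then obtain i where i: "i < length es - p" "x = es!(p+i)" by (auto simp: in_set_conv_nth)
      have "ends x \<subseteq> S" using i L(6) after[of "p+i"] after[of "Suc (p+i)"] L(1) by auto
      moreover have "x \<in> set es" using i by auto
      ultimately show "x \<in> set es \<inter> ES" using h3 EE by auto
    qed
    show "set es \<inter> ES \<subseteq> set (drop p es)"
    proof
      fix x assume x: "x \<in> set es \<inter> ES"
      then obtain k where k: "k < length es" "x = es!k" by (auto simp: in_set_conv_nth)
      have "ends x \<subseteq> S" using h3' x by auto
      then have "vs!k \<in> S" using L(6) k by auto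
      then have "p \<le> k" using before[of k] by (metis not_le_imp_less)
      then have "x = drop p es ! (k - p)" "k - p < length (drop p es)" using k by auto
      then show "x \<in> set (drop p es)" by (metis nth_mem)
    qed
  qed
  show ?thesis unfolding is_path_def
  proof (intro exI conjI)
    show "length (drop p vs) = Suc (length (drop p es))" using L(1) ple by simp
    show "distinct (drop p vs)" "distinct (drop p es)" using L(2,3) by auto
    show "hd (drop p vs) = c" using vpc ple L(1) by (simp add: hd_drop_conv_nth)
    show "last (drop p vs) = w" using L(5) ple L(1) by simp
    show "(fst Q \<inter> S, snd Q \<inter> ES) = (set (drop p vs), set (drop p es))" using sv se L(7) by simp
    show "\<forall>i<length (drop p es). ends (drop p es ! i) = {drop p vs ! i, drop p vs ! Suc i}"
      using L(6) L(1) ple by auto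
  qed
qed


lemma cnt_size_all: assumes "cnt e A = size A" shows "\<forall>S\<in>#A. e \<in> snd S"
proof (rule ccontr)
  assume "\<not> (\<forall>S\<in>#A. e \<in> snd S)"
  then obtain S where S: "S \<in># A" "e \<notin> snd S" by auto
  then obtain A' where A: "A = add_mset S A'" by (metis multi_member_split)
  have "cnt e A' \<le> size A'" unfolding cnt_def by simp
  then show False using assms A S by simp
qed

lemma restrict_cover:
  assumes SG: "signed_graph ends sig V E"
    and SV: "ES \<subseteq> E" "c \<in> S" "b \<in> S" "b \<noteq> c" "a \<notin> S"
    and X: "\<forall>e\<in>E. ends e \<inter> S \<noteq> {} \<and> \<not> ends e \<subseteq> S \<longrightarrow> ends e \<inter> S = {c}"
    and h3: "\<forall>e\<in>E. ends e \<subseteq> S \<longrightarrow> e \<in> ES" and h3': "\<forall>e\<in>ES. ends e \<subseteq> S"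
    and circ: "\<forall>C. is_circuit ends C \<and> snd C \<subseteq> E \<longrightarrow> snd C \<subseteq> ES"
    and H: "psi_cover ends sig V E a b 2 Pp Pn Tx Ty Cs"
    and nb: "\<forall>T\<in>#Tx. b \<notin> fst T"
  shows "\<exists>Pp' Pn' Tx'. psi_cover ends sig S ES c b 2 Pp' Pn' Tx' Ty Cs \<and> (\<forall>T\<in>#Tx'. b \<notin> fst T)"
proof -
  note h = psi_parts[OF H]
  define r where "r = (\<lambda>M. (fst M \<inter> S, snd M \<inter> ES))"
  have finE: "finite E" and sgE: "\<forall>e\<in>E. sig e \<in> {1,-1}" using SG unfolding signed_graph_def by auto
  have subG: "\<And>M. M \<in># Pp + Pn + Tx + Ty + Cs \<Longrightarrow> is_subgraph ends V E M" using h(4) by auto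
  have circS: "\<And>C. is_circuit ends C \<Longrightarrow> snd C \<subseteq> E \<Longrightarrow> fst C \<subseteq> S \<and> snd C \<subseteq> ES"
  proof -
    fix C assume C: "is_circuit ends C" "snd C \<subseteq> E"
    then have CE: "snd C \<subseteq> ES" using circ by blast
    have "fst C \<subseteq> S"
    proof
      fix v assume "v \<in> fst C"
      then obtain e where "e \<in> snd C" "v \<in> ends e" using circuit_vertex_edge[OF C(1)] by blast
      then show "v \<in> S" using CE h3' by blast
    qed
    then show "fst C \<subseteq> S \<and> snd C \<subseteq> ES" using CE by simp
  qed
  have tadS: "\<And>T. is_tadpole ends sig b T \<Longrightarrow> snd T \<subseteq> E \<Longrightarrow> fst T \<subseteq> S \<and> snd T \<subseteq> ES"
  proof -
    fix T assume T: "is_tadpole ends sig b T" "snd T \<subseteq> E"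
    obtain y Q C where Q: "is_path ends b y Q" and C: "is_circuit ends C"
      and QC: "fst Q \<inter> fst C = {y}" and TT: "T = sg_union Q C"
      using T(1) unfolding is_tadpole_def by blast
    have "snd C \<subseteq> E" "snd Q \<subseteq> E" using T(2) TT unfolding sg_union_def by auto
    then have C': "fst C \<subseteq> S \<and> snd C \<subseteq> ES" using circS C by blast
    then have "y \<in> S" using QC by auto
    then have "fst Q \<subseteq> S \<and> snd Q \<subseteq> ES" using path_in_S[OF Q \<open>snd Q \<subseteq> E\<close> SV(3) _ X h3] by blast
    then show "fst T \<subseteq> S \<and> snd T \<subseteq> ES" using C' TT unfolding sg_union_def by auto
  qed
  have csS: "\<And>M. signed_circuit ends sig M \<Longrightarrow> snd M \<subseteq> E \<Longrightarrow> fst M \<subseteq> S \<and> snd M \<subseteq> ES"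
  proof -
    fix M assume M: "signed_circuit ends sig M" "snd M \<subseteq> E"
    show "fst M \<subseteq> S \<and> snd M \<subseteq> ES"
    proof (cases "is_circuit ends M")
      case True then show ?thesis using circS M(2) by blast
    next
      case False
      then have "is_barbell ends sig M" using M(1) unfolding signed_circuit_def by blast
      then obtain C1 C2 P where C: "is_circuit ends C1" "is_circuit ends C2"
        and MM: "M = sg_union (sg_union C1 C2) P"
        and PP: "(\<exists>u. P = ({u}, {}) \<and> fst C1 \<inter> fst C2 = {u}) \<or>
       (fst C1 \<inter> fst C2 = {} \<and> (\<exists>u v. u \<in> fst C1 \<and> v \<in> fst C2 \<and> is_path ends u v P \<and>
           fst P \<inter> (fst C1 \<union> fst C2) = {u, v}))"
        unfolding is_barbell_def by blast
      have E3: "snd C1 \<subseteq> E" "snd C2 \<subseteq> E" "snd P \<subseteq> E" using M(2) MM unfolding sg_union_def by auto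
      have c1: "fst C1 \<subseteq> S \<and> snd C1 \<subseteq> ES" using circS C(1) E3 by blast
      have c2: "fst C2 \<subseteq> S \<and> snd C2 \<subseteq> ES" using circS C(2) E3 by blast
      have "fst P \<subseteq> S \<and> snd P \<subseteq> ES"
        using PP
      proof
        assume "\<exists>u. P = ({u}, {}) \<and> fst C1 \<inter> fst C2 = {u}"
        then show ?thesis using c1 by auto
      next
        assume "fst C1 \<inter> fst C2 = {} \<and> (\<exists>u v. u \<in> fst C1 \<and> v \<in> fst C2 \<and> is_path ends u v P \<and>
           fst P \<inter> (fst C1 \<union> fst C2) = {u, v})"
        then obtain u v where uv: "u \<in> fst C1" "v \<in> fst C2" "is_path ends u v P" by blast
        show ?thesis using path_in_S[OF uv(3) E3(3) _ _ X h3] uv c1 c2 by blast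
      qed
      then show ?thesis using c1 c2 MM unfolding sg_union_def by auto
    qed
  qed
  have memE: "\<And>M. M \<in># Pp + Pn + Tx + Ty + Cs \<Longrightarrow> snd M \<subseteq> E" using subG unfolding is_subgraph_def by blast
  have TyS: "\<And>M. M \<in># Ty \<Longrightarrow> fst M \<subseteq> S \<and> snd M \<subseteq> ES"
  proof -
    fix M assume "M \<in># Ty" then show "fst M \<subseteq> S \<and> snd M \<subseteq> ES" using tadS[of M] h(11) memE[of M] by auto
  qed
  have CsS: "\<And>M. M \<in># Cs \<Longrightarrow> fst M \<subseteq> S \<and> snd M \<subseteq> ES"
  proof -
    fix M assume "M \<in># Cs" then show "fst M \<subseteq> S \<and> snd M \<subseteq> ES" using csS[of M] h(12) memE[of M] by auto
  qed
  have rpath: "\<And>Q. Q \<in># Pp + Pn \<Longrightarrow> is_path ends a b Q \<Longrightarrow> is_path ends c b (r Q)"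
  proof -
    fix Q assume Q: "Q \<in># Pp + Pn" "is_path ends a b Q"
    have "snd Q \<subseteq> E" using memE[of Q] Q(1) by auto
    then show "is_path ends c b (r Q)" unfolding r_def using path_suffix[OF Q(2) _ SV(5) SV(3) X h3 h3'] by simp
  qed
  have rtad: "\<And>T. T \<in># Tx \<Longrightarrow> is_tadpole ends sig c (r T) \<and> b \<notin> fst (r T)"
  proof -
    fix T assume T: "T \<in># Tx"
    then have TE: "snd T \<subseteq> E" using memE[of T] by auto
    obtain y Q C where Q: "is_path ends a y Q" and C: "is_circuit ends C" "\<not> balanced sig C"
      and QC: "fst Q \<inter> fst C = {y}" and TT: "T = sg_union Q C"
      using h(10) T unfolding is_tadpole_def by blast
    have "snd C \<subseteq> E" "snd Q \<subseteq> E" using TE TT unfolding sg_union_def by auto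
    then have C': "fst C \<subseteq> S \<and> snd C \<subseteq> ES" using circS C by blast
    then have yS: "y \<in> S" using QC by auto
    have RQ: "is_path ends c y (r Q)" unfolding r_def
      using path_suffix[OF Q \<open>snd Q \<subseteq> E\<close> SV(5) yS X h3 h3'] .
    have "fst (r Q) \<inter> fst C = {y}" using QC yS unfolding r_def by auto
    moreover have "r T = sg_union (r Q) C" using TT C' unfolding r_def sg_union_def by auto
    ultimately have "is_tadpole ends sig c (r T)" unfolding is_tadpole_def using RQ C by blast
    moreover have "b \<notin> fst (r T)" using nb T unfolding r_def by auto
    ultimately show "is_tadpole ends sig c (r T) \<and> b \<notin> fst (r T)" by blast
  qed
  define Oe where "Oe = E - ES"
  define s where "s = (\<Prod>e\<in>Oe. sig e)"
  have finO: "finite Oe" using finE unfolding Oe_def by simp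
  have s: "s \<in> {1,-1}" unfolding s_def using prod_pm1[OF finO] sgE unfolding Oe_def by auto
  have allO: "\<And>e M. e \<in> Oe \<Longrightarrow> M \<in># Pp + Pn + Tx \<Longrightarrow> e \<in> snd M"
  proof -
    fix e M assume e: "e \<in> Oe" and M: "M \<in># Pp + Pn + Tx"
    have "\<forall>M\<in>#Ty + Cs. e \<notin> snd M"
    proof
      fix M assume "M \<in># Ty + Cs"
      then have "snd M \<subseteq> ES" using TyS[of M] CsS[of M] by auto
      then show "e \<notin> snd M" using e unfolding Oe_def by auto
    qed
    then have z: "cnt e (Ty + Cs) = 0" by (rule cnt_none)
    have eE: "e \<in> E" using e unfolding Oe_def by simp
    have six: "cnt e (Pp + Pn + Tx + Ty + Cs) = 6" using h(5) eE by blast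
    have "cnt e (Pp + Pn + Tx + Ty + Cs) = cnt e (Pp + Pn + Tx) + cnt e (Ty + Cs)"
      by simp
    then have "cnt e (Pp + Pn + Tx) = 6" using z six by simp
    moreover have "size (Pp + Pn + Tx) = 6" using h(6-8) by simp
    ultimately have "cnt e (Pp + Pn + Tx) = size (Pp + Pn + Tx)" by simp
    from cnt_size_all[OF this] M show "e \<in> snd M" by blast
  qed
  have rsign: "\<And>Q. Q \<in># Pp + Pn \<Longrightarrow> sg_sign sig (r Q) = s * sg_sign sig Q"
  proof -
    fix Q assume Q: "Q \<in># Pp + Pn"
    have QE: "snd Q \<subseteq> E" using memE[of Q] Q by auto
    have Q3: "Q \<in># Pp + Pn + Tx" using Q by auto
    have sub: "Oe \<subseteq> snd Q"
    proof
      fix e assume "e \<in> Oe" then show "e \<in> snd Q" using allO[OF _ Q3] by blast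
    qed
    have "snd Q = Oe \<union> snd (r Q)"
    proof
      show "snd Q \<subseteq> Oe \<union> snd (r Q)" using QE unfolding r_def Oe_def by auto
      show "Oe \<union> snd (r Q) \<subseteq> snd Q" using sub unfolding r_def by auto
    qed
    moreover have "Oe \<inter> snd (r Q) = {}" unfolding r_def Oe_def by auto
    moreover have "finite (snd (r Q))" using QE finE unfolding r_def by (auto intro: finite_subset)
    ultimately have "sg_sign sig Q = s * sg_sign sig (r Q)" unfolding sg_sign_def s_def
      using prod.union_disjoint[OF finO, of "snd (r Q)" sig] by simp
    then show "sg_sign sig (r Q) = s * sg_sign sig Q" using s by auto
  qed
  define Pp' where "Pp' = (if s = 1 then image_mset r Pp else image_mset r Pn)"
  define Pn' where "Pn' = (if s = 1 then image_mset r Pn else image_mset r Pp)"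
  have PPsum: "Pp' + Pn' = image_mset r (Pp + Pn)" unfolding Pp'_def Pn'_def by (simp add: add_ac)
  have "psi_cover ends sig S ES c b 2 Pp' Pn' (image_mset r Tx) Ty Cs"
  proof (rule psi_intro)
    show "c \<in> S" "b \<in> S" "c \<noteq> b" using SV by auto
    show "size Pp' = 2" "size Pn' = 2" "size (image_mset r Tx) = 2" "size Ty = 2"
      unfolding Pp'_def Pn'_def using h(6-9) by auto
    show "\<forall>T\<in>#Ty. is_tadpole ends sig b T" using h(11) .
    show "\<forall>C\<in>#Cs. signed_circuit ends sig C" using h(12) .
    show "\<forall>T\<in>#image_mset r Tx. is_tadpole ends sig c T" using rtad by auto
    show "\<forall>Q\<in>#Pp'. is_path ends c b Q \<and> sg_sign sig Q = 1"
      unfolding Pp'_def using s rpath rsign h(13,14) by auto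
    show "\<forall>Q\<in>#Pn'. is_path ends c b Q \<and> sg_sign sig Q = -1"
      unfolding Pn'_def using s rpath rsign h(13,14) by auto
    show "\<forall>M\<in>#Pp' + Pn' + image_mset r Tx + Ty + Cs. is_subgraph ends S ES M"
    proof
      fix M assume M: "M \<in># Pp' + Pn' + image_mset r Tx + Ty + Cs"
      then have "M \<in># image_mset r (Pp + Pn + Tx) \<or> M \<in># Ty + Cs"
        using PPsum by (metis image_mset_union union_iff)
      then show "is_subgraph ends S ES M"
      proof
        assume "M \<in># image_mset r (Pp + Pn + Tx)"
        then obtain R where R: "R \<in># Pp + Pn + Tx" "M = r R" by auto
        then have "is_subgraph ends V E R" using subG[of R] by auto
        then show ?thesis using R h3' unfolding is_subgraph_def r_def by auto
      next
        assume M2: "M \<in># Ty + Cs"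
        then have "is_subgraph ends V E M" using subG[of M] by auto
        moreover have "fst M \<subseteq> S \<and> snd M \<subseteq> ES" using M2 TyS[of M] CsS[of M] by auto
        ultimately show ?thesis unfolding is_subgraph_def by auto
      qed
    qed
    show "\<forall>e\<in>ES. cnt e (Pp' + Pn' + image_mset r Tx + Ty + Cs) = 6"
    proof
      fix e assume e: "e \<in> ES"
      have eq: "cnt e (Pp' + Pn' + image_mset r Tx + Ty + Cs) = cnt e (image_mset r (Pp + Pn + Tx)) + cnt e (Ty + Cs)"
        using PPsum by (metis cnt_plus image_mset_union add.assoc)
      have "cnt e (image_mset r (Pp + Pn + Tx)) = cnt e (Pp + Pn + Tx)"
        by (rule cnt_image) (use e in \<open>auto simp: r_def\<close>)
      moreover have "cnt e (Pp + Pn + Tx + Ty + Cs) = 6" using h(5) e SV(1) by blast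
      ultimately show "cnt e (Pp' + Pn' + image_mset r Tx + Ty + Cs) = 6" using eq by simp
    qed
  qed
  moreover have "\<forall>T\<in>#image_mset r Tx. b \<notin> fst T" using rtad by auto
  ultimately show ?thesis by blast
qed


lemma rtr_single:
  assumes "(u, v) \<in> {(a, b). \<exists>f\<in>F. ends f = {a, b}}\<^sup>*" "F \<subseteq> {e}"
  shows "u = v \<or> (u \<in> ends e \<and> v \<in> ends e)"
  using assms(1)
proof (induction rule: rtrancl_induct)
  case base then show ?case by simp
next
  case (step w v)
  then have "ends e = {w, v}" using assms(2) by auto
  then show ?case using step.IH by auto
qed

locale ser =
  fixes ends :: "'e \<Rightarrow> 'v set" and sig :: "'e \<Rightarrow> int" and V :: "'v set" and E :: "'e set"
    and n :: nat and xs :: "nat \<Rightarrow> 'v" and PV :: "nat \<Rightarrow> 'v set" and PE :: "nat \<Rightarrow> 'e set"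
  assumes sg: "signed_graph ends sig V E" and sc: "series_conn ends sig V E n xs PV PE"
    and n2: "n \<ge> 2" and b0: "B0_idx n xs = {}"
begin

lemma tt: "i \<in> {1..n} \<Longrightarrow> two_terminal ends sig (PV i) (PE i) (xs (i - 1)) (xs i)"
  using sc unfolding series_conn_def by blast

lemma neq: "i \<in> {1..n} \<Longrightarrow> xs (i - 1) \<noteq> xs i"
  using b0 unfolding B0_idx_def by blast

lemma VE: "V = (\<Union>i\<in>{1..n}. PV i)" "E = (\<Union>i\<in>{1..n}. PE i)"
  using sc unfolding series_conn_def by blast+

lemma disj:
  assumes "i \<in> {1..n}" "j \<in> {1..n}" "i < j"
  shows "PE i \<inter> PE j = {}" "PV i \<inter> PV j = (if j = Suc i then {xs i} else {})"
proof -
  have A: "PE i \<inter> PE j = {} \<and>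
        PV i \<inter> PV j = (if (\<forall>k. i < k \<and> k < j \<longrightarrow> xs (k - 1) = xs k) then {xs i} else {})"
    using sc assms unfolding series_conn_def by blast
  then show "PE i \<inter> PE j = {}" by simp
  have "(\<forall>k. i < k \<and> k < j \<longrightarrow> xs (k - 1) = xs k) \<longleftrightarrow> j = Suc i"
  proof
    assume H: "\<forall>k. i < k \<and> k < j \<longrightarrow> xs (k - 1) = xs k"
    show "j = Suc i"
    proof (rule ccontr)
      assume "j \<noteq> Suc i"
      then have "i < Suc i" "Suc i < j" using assms by auto
      then have "xs (Suc i - 1) = xs (Suc i)" using H by blast
      moreover have "Suc i \<in> {1..n}" using assms \<open>Suc i < j\<close> by auto
      ultimately show False using neq by blast
    qed
  next
    assume "j = Suc i" then show "\<forall>k. i < k \<and> k < j \<longrightarrow> xs (k - 1) = xs k" by auto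
  qed
  then show "PV i \<inter> PV j = (if j = Suc i then {xs i} else {})" using A by simp
qed

lemma conn: "i \<in> {1..n} \<Longrightarrow> sg_connected ends (PV i, PE i)"
  using tt unfolding two_terminal_def by blast

lemma endsP: "i \<in> {1..n} \<Longrightarrow> e \<in> PE i \<Longrightarrow> ends e \<subseteq> PV i"
  using conn unfolding sg_connected_def by auto

lemma xsP: "i \<in> {1..n} \<Longrightarrow> xs (i - 1) \<in> PV i \<and> xs i \<in> PV i"
  using tt unfolding two_terminal_def by blast

lemma inj: assumes "k < j" "j \<le> n" shows "xs k \<noteq> xs j"
proof
  assume eq: "xs k = xs j"
  have k1: "Suc k \<in> {1..n}" "xs k \<in> PV (Suc k)" using xsP[of "Suc k"] assms by auto
  have j1: "j \<in> {1..n}" "xs j \<in> PV j" using xsP[of j] assms by auto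
  show False
  proof (cases "j = Suc k")
    case True then show False using neq[of j] eq assms by simp
  next
    case False
    then have "Suc k < j" using assms by simp
    then have "PV (Suc k) \<inter> PV j = (if j = Suc (Suc k) then {xs (Suc k)} else {})" using disj k1 j1 by blast
    then have "xs k = xs (Suc k)" using k1 j1 eq by (auto split: if_splits)
    then show False using neq[of "Suc k"] k1 by simp
  qed
qed

lemma inj': "k \<le> n \<Longrightarrow> j \<le> n \<Longrightarrow> xs k = xs j \<Longrightarrow> k = j"
  using inj by (metis linorder_neqE_nat)

lemma loc:
  assumes m: "m \<le> n" and i: "i \<in> {1..n}" and x: "xs m \<in> PV i"
  shows "m = i - 1 \<or> m = i"
proof -
  define j where "j = (if m = 0 then 1 else m)"
  have j: "j \<in> {1..n}" "xs m \<in> PV j" using xsP[of j] m n2 unfolding j_def by auto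
  show ?thesis
  proof (cases "j = i")
    case True then show ?thesis unfolding j_def by (auto split: if_splits)
  next
    case False
    show ?thesis
    proof (cases "i < j")
      case True
      then have "PV i \<inter> PV j = (if j = Suc i then {xs i} else {})" using disj i j(1) by blast
      then have "xs m = xs i" using x j(2) by (auto split: if_splits)
      then show ?thesis using inj' m i by auto
    next
      case False
      then have "j < i" using \<open>j \<noteq> i\<close> by simp
      then have "PV j \<inter> PV i = (if i = Suc j then {xs j} else {})" using disj i j(1) by blast
      then have "xs m = xs j" "i = Suc j" using x j(2) by (auto split: if_splits)
      then have "m = j" using inj' m j(1) by auto
      then show ?thesis using \<open>i = Suc j\<close> by simp
    qed
  qed
qed

lemma finE: "finite E" and sigE: "\<forall>e\<in>E. sig e \<in> {1,-1}"
  and cardE: "\<forall>e\<in>E. card (ends e) \<in> {1,2}" and endsV: "\<forall>e\<in>E. ends e \<subseteq> V"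
  using sg unfolding signed_graph_def by auto

lemma PE_sub: "i \<in> {1..n} \<Longrightarrow> PE i \<subseteq> E" using VE by auto
lemma PV_sub: "i \<in> {1..n} \<Longrightarrow> PV i \<subseteq> V" using VE by auto

lemma PE_ne: assumes i: "i \<in> {1..n}" shows "PE i \<noteq> {}"
proof
  assume E0: "PE i = {}"
  have "(xs (i - 1), xs i) \<in> {(a, b). \<exists>f\<in>PE i. ends f = {a, b}}\<^sup>*"
    using conn[OF i] xsP[OF i] unfolding sg_connected_def by auto
  then have "xs (i - 1) = xs i" using E0 by simp
  then show False using neq[OF i] by simp
qed

lemma B1_shape:
  assumes i: "i \<in> {1..n}" and c: "card (PE i) = 1"
  shows "\<exists>e. PE i = {e} \<and> ends e = {xs (i - 1), xs i} \<and> PV i = {xs (i - 1), xs i}"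
proof -
  obtain e where e: "PE i = {e}" using c card_1_singletonE by blast
  have R: "\<And>u v. u \<in> PV i \<Longrightarrow> v \<in> PV i \<Longrightarrow> u = v \<or> (u \<in> ends e \<and> v \<in> ends e)"
  proof -
    fix u v assume "u \<in> PV i" "v \<in> PV i"
    then have "(u, v) \<in> {(a, b). \<exists>f\<in>PE i. ends f = {a, b}}\<^sup>*" using conn[OF i] unfolding sg_connected_def by auto
    then show "u = v \<or> (u \<in> ends e \<and> v \<in> ends e)" using rtr_single[of u v "PE i" ends e] e by simp
  qed
  have x: "xs (i - 1) \<in> ends e \<and> xs i \<in> ends e" using R[of "xs (i - 1)" "xs i"] xsP[OF i] neq[OF i] by simp
  have eE: "e \<in> E" using e PE_sub[OF i] by auto
  have "card (ends e) \<le> 2" using cardE eE by auto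
  moreover have fin: "finite (ends e)" using cardE eE by (intro card_ge_0_finite) auto
  ultimately have ee: "ends e = {xs (i - 1), xs i}"
  proof -
    have sub: "{xs (i - 1), xs i} \<subseteq> ends e" using x by auto
    have "card {xs (i - 1), xs i} = 2" using neq[OF i] by simp
    then show ?thesis using card_seteq[OF fin sub] \<open>card (ends e) \<le> 2\<close> by simp
  qed
  have "PV i \<subseteq> ends e"
  proof
    fix u assume "u \<in> PV i"
    then show "u \<in> ends e" using R[of u "xs i"] xsP[OF i] x by auto
  qed
  moreover have "ends e \<subseteq> PV i" using endsP[OF i] e by auto
  ultimately show ?thesis using e ee by auto
qed

end

context ser begin

definition VV where "VV k = (\<Union>i\<in>{1..k}. PV i)"
definition EE where "EE k = (\<Union>i\<in>{1..k}. PE i)"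

lemma VV_Suc: "VV (Suc k) = VV k \<union> PV (Suc k)" unfolding VV_def by (auto simp: atLeastAtMostSuc_conv)
lemma EE_Suc: "EE (Suc k) = EE k \<union> PE (Suc k)" unfolding EE_def by (auto simp: atLeastAtMostSuc_conv)
lemma VV_1: "VV 1 = PV 1" unfolding VV_def by simp
lemma EE_1: "EE 1 = PE 1" unfolding EE_def by simp
lemma VV_n: "VV n = V" unfolding VV_def using VE by simp
lemma EE_n: "EE n = E" unfolding EE_def using VE by simp

lemma pre_int:
  assumes "1 \<le> k" "k < n"
  shows "VV k \<inter> PV (Suc k) = {xs k}" "EE k \<inter> PE (Suc k) = {}"
proof -
  have s: "Suc k \<in> {1..n}" using assms by auto
  show "VV k \<inter> PV (Suc k) = {xs k}"
  proof
    show "VV k \<inter> PV (Suc k) \<subseteq> {xs k}"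
    proof
      fix v assume v: "v \<in> VV k \<inter> PV (Suc k)"
      then obtain i where i: "i \<in> {1..k}" "v \<in> PV i" unfolding VV_def by auto
      have "PV i \<inter> PV (Suc k) = (if Suc k = Suc i then {xs i} else {})"
        using disj[of i "Suc k"] i assms s by auto
      then show "v \<in> {xs k}" using i v by (auto split: if_splits)
    qed
    show "{xs k} \<subseteq> VV k \<inter> PV (Suc k)"
      using xsP[of k] xsP[OF s] assms unfolding VV_def by auto
  qed
  show "EE k \<inter> PE (Suc k) = {}"
  proof -
    have "\<And>i. i \<in> {1..k} \<Longrightarrow> PE i \<inter> PE (Suc k) = {}" using disj s assms by auto
    then show ?thesis unfolding EE_def by blast
  qed
qed

lemma xsn_notin: assumes "k < n" shows "xs n \<notin> VV k"
proof
  assume "xs n \<in> VV k"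
  then obtain i where i: "i \<in> {1..k}" "xs n \<in> PV i" unfolding VV_def by auto
  then have "n = i - 1 \<or> n = i" using loc[of n i] assms by auto
  then show False using i assms by auto
qed

lemma xs0_notin: assumes "i \<in> {1..n}" "i \<ge> 2" shows "xs 0 \<notin> PV i"
  using loc[of 0 i] assms by auto

lemma xsn_notin_PV: assumes "i \<in> {1..n}" "i < n" shows "xs n \<notin> PV i"
  using loc[of n i] assms by auto

lemma EE_sub: "k \<le> n \<Longrightarrow> EE k \<subseteq> E" unfolding EE_def using VE by auto

lemma B2_iff: "i \<in> B2_idx n xs PE \<longleftrightarrow> i \<in> {1..n} \<and> card (PE i) \<ge> 2"
  unfolding B2_idx_def using neq by auto

lemma notB2: assumes "i \<in> {1..n}" "i \<notin> B2_idx n xs PE" shows "card (PE i) = 1"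
proof -
  have "finite (PE i)" using PE_sub[OF assms(1)] finE finite_subset by blast
  then have "card (PE i) \<ge> 1" using PE_ne[OF assms(1)] by (simp add: Suc_le_eq card_gt_0_iff)
  then show ?thesis using assms B2_iff by auto
qed

lemma B1_path: assumes "i \<in> {1..n}" "i \<notin> B2_idx n xs PE"
  shows "is_path ends (xs (i - 1)) (xs i) (PV i, PE i)"
proof -
  obtain e where e: "PE i = {e}" "ends e = {xs (i - 1), xs i}" "PV i = {xs (i - 1), xs i}"
    using B1_shape[OF assms(1) notB2[OF assms]] by blast
  show ?thesis using path_edge[of ends e "xs (i - 1)" "xs i"] e neq[OF assms(1)] by simp
qed

end

context ser begin

definition claim :: "bool \<Rightarrow> bool \<Rightarrow> nat \<Rightarrow> bool" where
  "claim GL GR k \<longleftrightarrow>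
     (B2_idx n xs PE \<inter> {1..k} = {} \<longrightarrow> is_path ends (xs 0) (xs k) (VV k, EE k)) \<and>
     (B2_idx n xs PE \<inter> {1..k} \<noteq> {} \<longrightarrow> (\<exists>Pp Pn Tx Ty Cs. psi_cover ends sig (VV k) (EE k) (xs 0) (xs k) 2 Pp Pn Tx Ty Cs \<and>
        ((B2_idx n xs PE \<inter> {1..k} \<noteq> {1} \<or> GL) \<longrightarrow> (\<forall>T\<in>#Ty. xs 0 \<notin> fst T)) \<and>
        ((B2_idx n xs PE \<inter> {1..k} \<noteq> {n} \<or> GR) \<longrightarrow> (\<forall>T\<in>#Tx. xs n \<notin> fst T))))"

lemma sub_fst: "psi_cover ends sig A B x y 2 Pp Pn Tx Ty Cs \<Longrightarrow> T \<in># Pp + Pn + Tx + Ty + Cs \<Longrightarrow> fst T \<subseteq> A"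
  using psi_parts(4)[of ends sig A B x y Pp Pn Tx Ty Cs] unfolding is_subgraph_def by blast

lemma claimI1: "B2_idx n xs PE \<inter> {1..k} = {} \<Longrightarrow> is_path ends (xs 0) (xs k) (VV k, EE k) \<Longrightarrow> claim GL GR k"
  unfolding claim_def by blast

lemma claimI2: "B2_idx n xs PE \<inter> {1..k} \<noteq> {} \<Longrightarrow> psi_cover ends sig (VV k) (EE k) (xs 0) (xs k) 2 Pp Pn Tx Ty Cs \<Longrightarrow>
   ((B2_idx n xs PE \<inter> {1..k} \<noteq> {1} \<or> GL) \<longrightarrow> (\<forall>T\<in>#Ty. xs 0 \<notin> fst T)) \<Longrightarrow>
   ((B2_idx n xs PE \<inter> {1..k} \<noteq> {n} \<or> GR) \<longrightarrow> (\<forall>T\<in>#Tx. xs n \<notin> fst T)) \<Longrightarrow> claim GL GR k"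
  unfolding claim_def by blast

lemma build:
  assumes cov: "\<forall>i\<in>B2_idx n xs PE. \<exists>Pp Pn Tx Ty Cs. psi_cover ends sig (PV i) (PE i) (xs (i - 1)) (xs i) 2 Pp Pn Tx Ty Cs \<and>
        (i = 1 \<and> GL \<longrightarrow> (\<forall>T\<in>#Ty. xs 0 \<notin> fst T)) \<and> (i = n \<and> GR \<longrightarrow> (\<forall>T\<in>#Tx. xs n \<notin> fst T))"
  shows "1 \<le> k \<Longrightarrow> k \<le> n \<Longrightarrow> claim GL GR k"
proof (induction k)
  case 0 then show ?case by simp
next
  case (Suc k)
  let ?B = "B2_idx n xs PE"
  define i where "i = Suc k"
  have i: "i \<in> {1..n}" using Suc unfolding i_def by auto
  show ?case
  proof (cases "k = 0")
    case True
    then have i1: "i = 1" unfolding i_def by simp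
    have B1: "?B \<inter> {1..Suc k} = (if 1 \<in> ?B then {1} else {})" using True by auto
    show ?thesis
    proof (cases "1 \<in> ?B")
      case False
      then show ?thesis using claimI1 B1 B1_path[of 1] True n2 VV_1 EE_1 by auto
    next
      case True1: True
      then obtain Pp Pn Tx Ty Cs where c: "psi_cover ends sig (PV 1) (PE 1) (xs 0) (xs 1) 2 Pp Pn Tx Ty Cs"
        "GL \<longrightarrow> (\<forall>T\<in>#Ty. xs 0 \<notin> fst T)" using cov n2 by fastforce
      have "\<forall>T\<in>#Tx. xs n \<notin> fst T"
      proof
        fix T assume "T \<in># Tx"
        then have "fst T \<subseteq> PV 1" using sub_fst[OF c(1)] by auto
        then show "xs n \<notin> fst T" using xsn_notin_PV[of 1] n2 by auto
      qed
      then show ?thesis using claimI2[of "Suc k" Pp Pn Tx Ty Cs GL GR] B1 True1 True c VV_1 EE_1 by auto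
    qed
  next
    case False
    then have k1: "1 \<le> k" "k < n" using Suc by auto
    have IH: "claim GL GR k" using Suc k1 by auto
    have VI: "VV k \<inter> PV i = {xs k}" "EE k \<inter> PE i = {}" using pre_int[OF k1] unfolding i_def by auto
    have VS: "VV (Suc k) = VV k \<union> PV i" "EE (Suc k) = EE k \<union> PE i" using VV_Suc EE_Suc unfolding i_def by auto
    have xk: "xs (i - 1) = xs k" unfolding i_def by simp
    have i2: "i \<ge> 2" using k1 unfolding i_def by simp
    have x0: "xs 0 \<notin> PV i" using xs0_notin[OF i i2] .
    have xn: "xs n \<notin> VV k" using xsn_notin[OF k1(2)] .
    have finEk: "finite (EE k)" using EE_sub[of k] k1 finE finite_subset by auto
    have finPE: "finite (PE i)" using PE_sub[OF i] finE finite_subset by auto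
    have sigEk: "\<forall>e\<in>EE k. sig e \<in> {1,-1}" using EE_sub[of k] k1 sigE by auto
    have sigPE: "\<forall>e\<in>PE i. sig e \<in> {1,-1}" using PE_sub[OF i] sigE by auto
    have BS: "?B \<inter> {1..Suc k} = (?B \<inter> {1..k}) \<union> (if i \<in> ?B then {i} else {})"
      unfolding i_def by (auto simp: atLeastAtMostSuc_conv)
    show ?thesis
    proof (cases "?B \<inter> {1..k} = {}")
      case Pth: True
      have P: "is_path ends (xs 0) (xs k) (VV k, EE k)" using IH Pth unfolding claim_def by blast
      show ?thesis
      proof (cases "i \<in> ?B")
        case False
        have "is_path ends (xs k) (xs i) (PV i, PE i)" using B1_path[OF i False] xk by simp
        then have "is_path ends (xs 0) (xs i) (sg_union (VV k, EE k) (PV i, PE i))"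
          using path_concat[OF P] VI by simp
        then show ?thesis using claimI1 BS Pth False VS unfolding sg_union_def i_def by auto
      next
        case True
        then obtain Pp Pn Tx Ty Cs where c: "psi_cover ends sig (PV i) (PE i) (xs k) (xs i) 2 Pp Pn Tx Ty Cs"
          "i = n \<and> GR \<longrightarrow> (\<forall>T\<in>#Tx. xs n \<notin> fst T)" using cov xk by fastforce
        obtain Pp' Pn' where c': "psi_cover ends sig (VV k \<union> PV i) (EE k \<union> PE i) (xs 0) (xs i) 2 Pp' Pn'
            (image_mset (sg_union (VV k, EE k)) Tx) Ty Cs"
          using L1[OF P c(1)] VI sigEk finPE by auto
        have Bi: "?B \<inter> {1..Suc k} = {i}" using BS Pth True by simp
        have ty: "\<forall>T\<in>#Ty. xs 0 \<notin> fst T"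
        proof
          fix T assume "T \<in># Ty"
          then have "fst T \<subseteq> PV i" using sub_fst[OF c(1)] by auto
          then show "xs 0 \<notin> fst T" using x0 by auto
        qed
        have tx: "(?B \<inter> {1..Suc k} \<noteq> {n} \<or> GR) \<longrightarrow> (\<forall>T\<in>#image_mset (sg_union (VV k, EE k)) Tx. xs n \<notin> fst T)"
        proof (intro impI ballI)
          fix T' assume H: "?B \<inter> {1..Suc k} \<noteq> {n} \<or> GR" and T': "T' \<in># image_mset (sg_union (VV k, EE k)) Tx"
          then obtain T where T: "T \<in># Tx" "T' = sg_union (VV k, EE k) T" by auto
          have fT: "fst T \<subseteq> PV i" using sub_fst[OF c(1)] T(1) by auto
          have "xs n \<notin> fst T"
          proof (cases "i = n")
            case True
            then have GR using H Bi by simp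
            then show ?thesis using c(2) True T(1) by blast
          next
            case False
            then have "i < n" using i by simp
            then show ?thesis using xsn_notin_PV[OF i] fT by auto
          qed
          then show "xs n \<notin> fst T'" using T(2) xn unfolding sg_union_def by auto
        qed
        show ?thesis using claimI2[of "Suc k" Pp' Pn' "image_mset (sg_union (VV k, EE k)) Tx" Ty Cs GL GR] Bi c' ty tx VS unfolding i_def by auto
      qed
    next
      case Cov: False
      obtain Pp Pn Tx Ty Cs where c: "psi_cover ends sig (VV k) (EE k) (xs 0) (xs k) 2 Pp Pn Tx Ty Cs"
        and cy: "(?B \<inter> {1..k} \<noteq> {1} \<or> GL) \<longrightarrow> (\<forall>T\<in>#Ty. xs 0 \<notin> fst T)"
        using IH Cov unfolding claim_def by blast
      have tx: "\<forall>T\<in>#Tx. xs n \<notin> fst T"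
      proof
        fix T assume "T \<in># Tx"
        then have "fst T \<subseteq> VV k" using sub_fst[OF c] by auto
        then show "xs n \<notin> fst T" using xn by auto
      qed
      show ?thesis
      proof (cases "i \<in> ?B")
        case False
        have P: "is_path ends (xs k) (xs i) (PV i, PE i)" using B1_path[OF i False] xk by simp
        obtain Pp' Pn' where c': "psi_cover ends sig (VV k \<union> PV i) (EE k \<union> PE i) (xs 0) (xs i) 2 Pp' Pn'
            Tx (image_mset (sg_union (PV i, PE i)) Ty) Cs"
          using L2[OF c P] VI sigPE finEk by (auto simp: Int_commute)
        have Bi: "?B \<inter> {1..Suc k} = ?B \<inter> {1..k}" using BS False by simp
        have ty: "(?B \<inter> {1..Suc k} \<noteq> {1} \<or> GL) \<longrightarrow> (\<forall>T\<in>#image_mset (sg_union (PV i, PE i)) Ty. xs 0 \<notin> fst T)"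
        proof (intro impI ballI)
          fix T' assume H: "?B \<inter> {1..Suc k} \<noteq> {1} \<or> GL" and T': "T' \<in># image_mset (sg_union (PV i, PE i)) Ty"
          then obtain T where T: "T \<in># Ty" "T' = sg_union (PV i, PE i) T" by auto
          have "xs 0 \<notin> fst T" using cy H Bi T(1) by auto
          then show "xs 0 \<notin> fst T'" using T(2) x0 unfolding sg_union_def by auto
        qed
        show ?thesis using claimI2[of "Suc k" Pp' Pn' Tx "image_mset (sg_union (PV i, PE i)) Ty" Cs GL GR] Cov Bi c' ty tx VS unfolding i_def by auto
      next
        case True
        then obtain Pp2 Pn2 Tx2 Ty2 Cs2 where c2: "psi_cover ends sig (PV i) (PE i) (xs k) (xs i) 2 Pp2 Pn2 Tx2 Ty2 Cs2"
          using cov xk by fastforce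
        obtain Pp' Pn' Cs' where c': "psi_cover ends sig (VV k \<union> PV i) (EE k \<union> PE i) (xs 0) (xs i) 2 Pp' Pn' Tx Ty2 Cs'"
          using L3[OF c c2 VI] by blast
        have ty: "\<forall>T\<in>#Ty2. xs 0 \<notin> fst T"
        proof
          fix T assume "T \<in># Ty2"
          then have "fst T \<subseteq> PV i" using sub_fst[OF c2] by auto
          then show "xs 0 \<notin> fst T" using x0 by auto
        qed
        show ?thesis using claimI2[of "Suc k" Pp' Pn' Tx Ty2 Cs' GL GR] Cov c' ty tx VS BS unfolding i_def by auto
      qed
    qed
  qed
qed

end

context ser begin

lemma edge_part: "e \<in> E \<Longrightarrow> \<exists>j\<in>{1..n}. e \<in> PE j" using VE by auto

lemma B1_edge: assumes "j \<in> {1..n}" "j \<notin> B2_idx n xs PE" "e \<in> PE j"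
  shows "PE j = {e}" "ends e = {xs (j - 1), xs j}" "PV j = {xs (j - 1), xs j}"
  using B1_shape[OF assms(1) notB2[OF assms(1,2)]] assms(3) by auto

lemma no_cross:
  assumes C: "is_circuit ends C" "snd C \<subseteq> E" and e: "e \<in> snd C" "card (ends e) = 2" "card (ends e \<inter> L) = 1"
    and oth: "\<forall>f\<in>E. f \<noteq> e \<longrightarrow> card (ends f) = 2 \<longrightarrow> card (ends f \<inter> L) \<noteq> 1"
  shows False
proof -
  have "fst C \<subseteq> V"
  proof
    fix v assume "v \<in> fst C"
    then obtain f where "f \<in> snd C" "v \<in> ends f" using circuit_vertex_edge[OF C(1)] by blast
    then show "v \<in> V" using endsV C(2) by blast
  qed
  then have fv: "finite (fst C)" using sg unfolding signed_graph_def using finite_subset by blast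
  have fe: "finite (snd C)" using C(2) finE finite_subset by blast
  have "{f\<in>snd C. card (ends f) = 2 \<and> card (ends f \<inter> L) = 1} = {e}" using e oth C(2) by auto
  then show False using circuit_cut_even[OF C(1) fe fv, of L] by simp
qed

lemma crossing_n:
  assumes B: "B2_idx n xs PE = {n}"
  shows "\<forall>C. is_circuit ends C \<and> snd C \<subseteq> E \<longrightarrow> snd C \<subseteq> PE n"
proof (intro allI impI subsetI)
  fix C f0 assume C: "is_circuit ends C \<and> snd C \<subseteq> E" and f0: "f0 \<in> snd C"
  show "f0 \<in> PE n"
  proof (rule ccontr)
    assume nf: "f0 \<notin> PE n"
    obtain j where j: "j \<in> {1..n}" "f0 \<in> PE j" using edge_part f0 C by blast
    have jn: "j < n" using j nf by (cases "j = n") auto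
    have jB: "j \<notin> B2_idx n xs PE" using B jn by auto
    note f = B1_edge[OF j(1) jB j(2)]
    define L where "L = xs ` {0..<j}"
    have inL: "\<And>m. m \<le> n \<Longrightarrow> xs m \<in> L \<longleftrightarrow> m < j"
    proof -
      fix m assume m: "m \<le> n"
      show "xs m \<in> L \<longleftrightarrow> m < j"
      proof
        assume "xs m \<in> L"
        then obtain l where "l < j" "xs m = xs l" unfolding L_def by auto
        then show "m < j" using inj'[of m l] m jn by auto
      qed (auto simp: L_def)
    qed
    have e1: "ends f0 \<inter> L = {xs (j - 1)}" using f(2) inL[of "j - 1"] inL[of j] j by auto
    have e2: "card (ends f0) = 2" using f(2) neq[OF j(1)] by simp
    have oth: "\<forall>f\<in>E. f \<noteq> f0 \<longrightarrow> card (ends f) = 2 \<longrightarrow> card (ends f \<inter> L) \<noteq> 1"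
    proof (intro ballI impI)
      fix f assume fE: "f \<in> E" and ff: "f \<noteq> f0" and c2: "card (ends f) = 2"
      obtain i where i: "i \<in> {1..n}" "f \<in> PE i" using edge_part fE by blast
      show "card (ends f \<inter> L) \<noteq> 1"
      proof (cases "i = n")
        case True
        have "ends f \<inter> L = {}"
        proof (rule ccontr)
          assume "ends f \<inter> L \<noteq> {}"
          then obtain l where l: "l < j" "xs l \<in> ends f" unfolding L_def by auto
          then have "xs l \<in> PV n" using endsP[of n f] i True by auto
          then have "l = n - 1 \<or> l = n" using loc[of l n] l jn n2 by auto
          then show False using l jn by auto
        qed
        then show ?thesis by simp
      next
        case False
        then have iB: "i \<notin> B2_idx n xs PE" using B by auto
        note g = B1_edge[OF i(1) iB i(2)]
        have ij: "i \<noteq> j" using ff f(1) i(2) g(1) by auto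
        have iin: "i \<le> n" "i - 1 \<le> n" using i by auto
        show ?thesis
        proof (cases "i < j")
          case True
          then have "ends f \<inter> L = ends f" using g(2) inL[OF iin(1)] inL[OF iin(2)] jn by auto
          then show ?thesis using c2 by simp
        next
          case False
          then have "ends f \<inter> L = {}" using g(2) inL[OF iin(1)] inL[OF iin(2)] ij i by auto
          then show ?thesis by simp
        qed
      qed
    qed
    show False using no_cross[of C f0 L] C f0 e1 e2 oth by simp
  qed
qed

lemma crossing_1:
  assumes B: "B2_idx n xs PE = {1}"
  shows "\<forall>C. is_circuit ends C \<and> snd C \<subseteq> E \<longrightarrow> snd C \<subseteq> PE 1"
proof (intro allI impI subsetI)
  fix C f0 assume C: "is_circuit ends C \<and> snd C \<subseteq> E" and f0: "f0 \<in> snd C"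
  show "f0 \<in> PE 1"
  proof (rule ccontr)
    assume nf: "f0 \<notin> PE 1"
    obtain j where j: "j \<in> {1..n}" "f0 \<in> PE j" using edge_part f0 C by blast
    have jn: "j \<ge> 2" using j nf by (cases "j = 1") auto
    have jB: "j \<notin> B2_idx n xs PE" using B jn by auto
    note f = B1_edge[OF j(1) jB j(2)]
    define L where "L = xs ` {j..n}"
    have inL: "\<And>m. m \<le> n \<Longrightarrow> xs m \<in> L \<longleftrightarrow> j \<le> m"
    proof -
      fix m assume m: "m \<le> n"
      show "xs m \<in> L \<longleftrightarrow> j \<le> m"
      proof
        assume "xs m \<in> L"
        then obtain l where "j \<le> l" "l \<le> n" "xs m = xs l" unfolding L_def by auto
        then show "j \<le> m" using inj'[of m l] m by auto
      qed (use m in \<open>auto simp: L_def\<close>)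
    qed
    have "j - 1 \<le> n" "\<not> j \<le> j - 1" using j by auto
    then have "xs (j - 1) \<notin> L" using inL[of "j - 1"] by blast
    moreover have "xs j \<in> L" using inL[of j] j by auto
    ultimately have e1: "ends f0 \<inter> L = {xs j}" using f(2) by auto
    have e2: "card (ends f0) = 2" using f(2) neq[OF j(1)] by simp
    have oth: "\<forall>f\<in>E. f \<noteq> f0 \<longrightarrow> card (ends f) = 2 \<longrightarrow> card (ends f \<inter> L) \<noteq> 1"
    proof (intro ballI impI)
      fix f assume fE: "f \<in> E" and ff: "f \<noteq> f0" and c2: "card (ends f) = 2"
      obtain i where i: "i \<in> {1..n}" "f \<in> PE i" using edge_part fE by blast
      show "card (ends f \<inter> L) \<noteq> 1"
      proof (cases "i = 1")
        case True
        have "ends f \<inter> L = {}"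
        proof (rule ccontr)
          assume "ends f \<inter> L \<noteq> {}"
          then obtain l where l: "j \<le> l" "l \<le> n" "xs l \<in> ends f" unfolding L_def by auto
          then have "xs l \<in> PV 1" using endsP[of 1 f] i True by auto
          then have "l = 0 \<or> l = 1" using loc[of l 1] l n2 by auto
          then show False using l jn by auto
        qed
        then show ?thesis by simp
      next
        case False
        then have iB: "i \<notin> B2_idx n xs PE" using B by auto
        note g = B1_edge[OF i(1) iB i(2)]
        have ij: "i \<noteq> j" using ff f(1) i(2) g(1) by auto
        have iin: "i \<le> n" "i - 1 \<le> n" using i by auto
        show ?thesis
        proof (cases "j < i")
          case True
          then have "ends f \<inter> L = ends f" using g(2) inL[OF iin(1)] inL[OF iin(2)] i by auto
          then show ?thesis using c2 by simp
        next
          case False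
          then have "ends f \<inter> L = {}" using g(2) inL[OF iin(1)] inL[OF iin(2)] ij i by auto
          then show ?thesis by simp
        qed
      qed
    qed
    show False using no_cross[of C f0 L] C f0 e1 e2 oth by simp
  qed
qed

end

context ser begin

lemma notboth3:
  assumes B: "B2_idx n xs PE = {n}" and H: "psi_cover ends sig V E (xs 0) (xs n) 2 Pp Pn Tx Ty Cs"
    and nb: "\<forall>T\<in>#Tx. xs n \<notin> fst T"
  shows "\<exists>Pp' Pn' Tx'. psi_cover ends sig (PV n) (PE n) (xs (n - 1)) (xs n) 2 Pp' Pn' Tx' Ty Cs \<and> (\<forall>T\<in>#Tx'. xs n \<notin> fst T)"
proof -
  have nn: "n \<in> {1..n}" using n2 by auto
  have X: "\<forall>e\<in>E. ends e \<inter> PV n \<noteq> {} \<and> \<not> ends e \<subseteq> PV n \<longrightarrow> ends e \<inter> PV n = {xs (n - 1)}"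
  proof (intro ballI impI)
    fix e assume e: "e \<in> E" and c: "ends e \<inter> PV n \<noteq> {} \<and> \<not> ends e \<subseteq> PV n"
    obtain j where j: "j \<in> {1..n}" "e \<in> PE j" using edge_part e by blast
    have jn: "j < n" using j c endsP[of n e] by (cases "j = n") auto
    have D: "PV j \<inter> PV n = (if n = Suc j then {xs j} else {})" using disj(2)[OF j(1) nn jn] .
    have "ends e \<subseteq> PV j" using endsP[OF j] .
    then have "ends e \<inter> PV n \<subseteq> PV j \<inter> PV n" by auto
    then have "n = Suc j" "ends e \<inter> PV n \<subseteq> {xs j}" using D c by (auto split: if_splits)
    then show "ends e \<inter> PV n = {xs (n - 1)}" using c by auto
  qed
  have h3: "\<forall>e\<in>E. ends e \<subseteq> PV n \<longrightarrow> e \<in> PE n"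
  proof (intro ballI impI)
    fix e assume e: "e \<in> E" and c: "ends e \<subseteq> PV n"
    obtain j where j: "j \<in> {1..n}" "e \<in> PE j" using edge_part e by blast
    show "e \<in> PE n"
    proof (cases "j = n")
      case True then show ?thesis using j by simp
    next
      case False
      then have jB: "j \<notin> B2_idx n xs PE" using B by auto
      have "ends e = {xs (j - 1), xs j}" using B1_edge[OF j(1) jB j(2)] by simp
      then have "xs (j - 1) \<in> PV n" using c by auto
      then have "j - 1 = n - 1 \<or> j - 1 = n" using loc[of "j - 1" n] j nn by auto
      then show ?thesis using False j by auto
    qed
  qed
  have h3': "\<forall>e\<in>PE n. ends e \<subseteq> PV n" using endsP[OF nn] by blast
  have a: "xs 0 \<notin> PV n" using xs0_notin[OF nn n2] .
  have bc: "xs n \<noteq> xs (n - 1)" using neq[OF nn] by simp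
  show ?thesis
    using restrict_cover[OF sg PE_sub[OF nn] _ _ bc a X h3 h3' crossing_n[OF B] H nb] xsP[OF nn] by blast
qed

lemma notboth2:
  assumes B: "B2_idx n xs PE = {1}" and H: "psi_cover ends sig V E (xs 0) (xs n) 2 Pp Pn Tx Ty Cs"
    and nb: "\<forall>T\<in>#Ty. xs 0 \<notin> fst T"
  shows "\<exists>Pp' Pn' Ty'. psi_cover ends sig (PV 1) (PE 1) (xs 0) (xs 1) 2 Pp' Pn' Tx Ty' Cs \<and> (\<forall>T\<in>#Ty'. xs 0 \<notin> fst T)"
proof -
  have nn: "1 \<in> {1..n}" using n2 by auto
  have X: "\<forall>e\<in>E. ends e \<inter> PV 1 \<noteq> {} \<and> \<not> ends e \<subseteq> PV 1 \<longrightarrow> ends e \<inter> PV 1 = {xs 1}"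
  proof (intro ballI impI)
    fix e assume e: "e \<in> E" and c: "ends e \<inter> PV 1 \<noteq> {} \<and> \<not> ends e \<subseteq> PV 1"
    obtain j where j: "j \<in> {1..n}" "e \<in> PE j" using edge_part e by blast
    have jn: "1 < j" using j c endsP[of 1 e] by (cases "j = 1") auto
    have D: "PV 1 \<inter> PV j = (if j = Suc 1 then {xs 1} else {})" using disj(2)[OF nn j(1) jn] .
    have "ends e \<subseteq> PV j" using endsP[OF j] .
    then have "ends e \<inter> PV 1 \<subseteq> PV 1 \<inter> PV j" by auto
    then have "ends e \<inter> PV 1 \<subseteq> {xs 1}" "j = Suc 1" using D c by (auto split: if_splits)
    then show "ends e \<inter> PV 1 = {xs 1}" using c by auto
  qed
  have h3: "\<forall>e\<in>E. ends e \<subseteq> PV 1 \<longrightarrow> e \<in> PE 1"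
  proof (intro ballI impI)
    fix e assume e: "e \<in> E" and c: "ends e \<subseteq> PV 1"
    obtain j where j: "j \<in> {1..n}" "e \<in> PE j" using edge_part e by blast
    show "e \<in> PE 1"
    proof (cases "j = 1")
      case True then show ?thesis using j by simp
    next
      case False
      then have jB: "j \<notin> B2_idx n xs PE" using B by auto
      have "ends e = {xs (j - 1), xs j}" using B1_edge[OF j(1) jB j(2)] by simp
      then have "xs j \<in> PV 1" using c by auto
      then have "j = 0 \<or> j = 1" using loc[of j 1] j nn by auto
      then show ?thesis using False j by auto
    qed
  qed
  have h3': "\<forall>e\<in>PE 1. ends e \<subseteq> PV 1" using endsP[OF nn] by blast
  have a: "xs n \<notin> PV 1" using xsn_notin_PV[OF nn] n2 by simp
  have bc: "xs 0 \<noteq> xs 1" using neq[OF nn] by simp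
  obtain Pp' Pn' Tx' where R: "psi_cover ends sig (PV 1) (PE 1) (xs 1) (xs 0) 2 Pp' Pn' Tx' Tx Cs"
      "\<forall>T\<in>#Tx'. xs 0 \<notin> fst T"
    using restrict_cover[OF sg PE_sub[OF nn] _ _ bc a X h3 h3' crossing_1[OF B] psi_swap[OF H] nb] xsP[OF nn] by auto
  show ?thesis using psi_swap[OF R(1)] R(2) by blast
qed

end

theorem mainTheorem3:
  fixes ends :: "'e \<Rightarrow> 'v set" and sig :: "'e \<Rightarrow> int" and V :: "'v set" and E :: "'e set"
    and n :: nat and xs :: "nat \<Rightarrow> 'v" and PV :: "nat \<Rightarrow> 'v set" and PE :: "nat \<Rightarrow> 'e set"
  assumes "signed_graph ends sig V E"
    and "series_parts ends sig V E n xs PV PE"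
    and "n \<ge> 2"
    and "B0_idx n xs = {}"
    and "B2_idx n xs PE \<noteq> {}"
    and "\<forall>i\<in>B2_idx n xs PE. \<exists>Pp Pn Tx Ty Cs.
            psi_cover ends sig (PV i) (PE i) (xs (i - 1)) (xs i) 2 Pp Pn Tx Ty Cs"
  shows "exactly_one3
     (\<exists>Pp Pn Tx Ty Cs. psi_cover ends sig V E (xs 0) (xs n) 2 Pp Pn Tx Ty Cs \<and>
         (\<forall>T\<in>#Tx. xs n \<notin> fst T) \<and> (\<forall>T\<in>#Ty. xs 0 \<notin> fst T))
     (B2_idx n xs PE = {1} \<and>
        (\<forall>Pp Pn Tx Ty Cs. psi_cover ends sig (PV 1) (PE 1) (xs 0) (xs 1) 2 Pp Pn Tx Ty Cs \<longrightarrow>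
           (\<exists>T\<in>#Ty. xs 0 \<in> fst T)))
     (B2_idx n xs PE = {n} \<and>
        (\<forall>Pp Pn Tx Ty Cs. psi_cover ends sig (PV n) (PE n) (xs (n - 1)) (xs n) 2 Pp Pn Tx Ty Cs \<longrightarrow>
           (\<exists>T\<in>#Tx. xs n \<in> fst T)))"
proof -
  interpret ser ends sig V E n xs PV PE
    using assms unfolding series_parts_def by unfold_locales auto
  let ?B = "B2_idx n xs PE"
  let ?A1 = "\<exists>Pp Pn Tx Ty Cs. psi_cover ends sig V E (xs 0) (xs n) 2 Pp Pn Tx Ty Cs \<and>
         (\<forall>T\<in>#Tx. xs n \<notin> fst T) \<and> (\<forall>T\<in>#Ty. xs 0 \<notin> fst T)"
  define GL where "GL = (\<exists>Pp Pn Tx Ty Cs. psi_cover ends sig (PV 1) (PE 1) (xs 0) (xs 1) 2 Pp Pn Tx Ty Cs \<and> (\<forall>T\<in>#Ty. xs 0 \<notin> fst T))"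
  define GR where "GR = (\<exists>Pp Pn Tx Ty Cs. psi_cover ends sig (PV n) (PE n) (xs (n - 1)) (xs n) 2 Pp Pn Tx Ty Cs \<and> (\<forall>T\<in>#Tx. xs n \<notin> fst T))"
  have A2: "(?B = {1} \<and> (\<forall>Pp Pn Tx Ty Cs. psi_cover ends sig (PV 1) (PE 1) (xs 0) (xs 1) 2 Pp Pn Tx Ty Cs \<longrightarrow>
           (\<exists>T\<in>#Ty. xs 0 \<in> fst T))) \<longleftrightarrow> ?B = {1} \<and> \<not> GL" unfolding GL_def by blast
  have A3: "(?B = {n} \<and> (\<forall>Pp Pn Tx Ty Cs. psi_cover ends sig (PV n) (PE n) (xs (n - 1)) (xs n) 2 Pp Pn Tx Ty Cs \<longrightarrow>
           (\<exists>T\<in>#Tx. xs n \<in> fst T))) \<longleftrightarrow> ?B = {n} \<and> \<not> GR" unfolding GR_def by blast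
  have cov: "\<forall>i\<in>?B. \<exists>Pp Pn Tx Ty Cs. psi_cover ends sig (PV i) (PE i) (xs (i - 1)) (xs i) 2 Pp Pn Tx Ty Cs \<and>
        (i = 1 \<and> GL \<longrightarrow> (\<forall>T\<in>#Ty. xs 0 \<notin> fst T)) \<and> (i = n \<and> GR \<longrightarrow> (\<forall>T\<in>#Tx. xs n \<notin> fst T))"
  proof
    fix i assume i: "i \<in> ?B"
    show "\<exists>Pp Pn Tx Ty Cs. psi_cover ends sig (PV i) (PE i) (xs (i - 1)) (xs i) 2 Pp Pn Tx Ty Cs \<and>
        (i = 1 \<and> GL \<longrightarrow> (\<forall>T\<in>#Ty. xs 0 \<notin> fst T)) \<and> (i = n \<and> GR \<longrightarrow> (\<forall>T\<in>#Tx. xs n \<notin> fst T))"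
    proof (cases "i = 1 \<and> GL")
      case True
      then show ?thesis using n2 unfolding GL_def by auto
    next
      case F1: False
      show ?thesis
      proof (cases "i = n \<and> GR")
        case True
        then show ?thesis using n2 F1 unfolding GR_def by auto
      next
        case False
        then show ?thesis using F1 assms(6) i by blast
      qed
    qed
  qed
  have cl: "claim GL GR n" using build[OF cov, of n] n2 by simp
  have Bn: "?B \<inter> {1..n} = ?B" unfolding B2_idx_def by auto
  have imp1: "(?B \<noteq> {1} \<or> GL) \<Longrightarrow> (?B \<noteq> {n} \<or> GR) \<Longrightarrow> ?A1"
    using cl assms(5) unfolding claim_def Bn VV_n EE_n by blast
  have n12: "\<not> (?B = {1} \<and> ?B = {n})" using n2 by auto
  have x2: "?A1 \<Longrightarrow> \<not> (?B = {1} \<and> \<not> GL)"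
  proof
    assume A: ?A1 and B: "?B = {1} \<and> \<not> GL"
    then obtain Pp Pn Tx Ty Cs where c: "psi_cover ends sig V E (xs 0) (xs n) 2 Pp Pn Tx Ty Cs"
      "\<forall>T\<in>#Ty. xs 0 \<notin> fst T" by blast
    then have GL using notboth2[OF _ c] B unfolding GL_def by blast
    then show False using B by simp
  qed
  have x3: "?A1 \<Longrightarrow> \<not> (?B = {n} \<and> \<not> GR)"
  proof
    assume A: ?A1 and B: "?B = {n} \<and> \<not> GR"
    then obtain Pp Pn Tx Ty Cs where c: "psi_cover ends sig V E (xs 0) (xs n) 2 Pp Pn Tx Ty Cs"
      "\<forall>T\<in>#Tx. xs n \<notin> fst T" by blast
    then have GR using notboth3[OF _ c] B unfolding GR_def by blast
    then show False using B by simp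
  qed
  show ?thesis unfolding exactly_one3_def A2 A3 using imp1 n12 x2 x3 by blast
qed


end
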